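(* Let $F(z,w)=\sum_{k=0}^\infty P_k(z)w^k$ be a formal power series in $w$ with coefficients $P_k\in\mathbb C[z]$. Then $F\in\overline{\mathcal H}_2(\mathbb C)$ if and only if $\sum_{k=0}^n(n)_kP_k(z)w^k\in\mathcal H_2(\mathbb C)\cup\{0\}$ for all $n\in\mathbb N$.
   Context: $\mathcal H_2(\mathbb C)$ is the set of non-zero polynomials in $z,w$ that do not vanish when $\Im z>0$ and $\Im w>0$. $\overline{\mathcal H}_2(\mathbb C)$ is the set of entire functions of two variables that are limits, uniformly on compact subsets of $\mathbb C^2$, of polynomials in $\mathcal H_2(\mathbb C)$; $F\in\overline{\mathcal H}_2(\mathbb C)$ means the series defines such an entire function. $(n)_k=n(n-1)\cdots(n-k+1)$ for $k\le n$ and $(n)_k=0$ for $k>n$. *)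

theory Defs
  imports "HOL-Analysis.Analysis" "HOL-Computational_Algebra.Polynomial"
begin

definition is_poly2 :: "(complex \<times> complex \<Rightarrow> complex) \<Rightarrow> bool" where
  "is_poly2 f \<longleftrightarrow> (\<exists>N c. \<forall>z w. f (z, w) = (\<Sum>i<N. \<Sum>j<N. c i j * z ^ i * w ^ j))"

definition H2 :: "(complex \<times> complex \<Rightarrow> complex) \<Rightarrow> bool" where
  "H2 f \<longleftrightarrow> is_poly2 f \<and> f \<noteq> (\<lambda>_. 0) \<and>
     (\<forall>z w. Im z > 0 \<longrightarrow> Im w > 0 \<longrightarrow> f (z, w) \<noteq> 0)"

definition H2bar :: "(complex \<times> complex \<Rightarrow> complex) \<Rightarrow> bool" where
  "H2bar G \<longleftrightarrow> (\<exists>p. (\<forall>n. H2 (p n)) \<and>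
     (\<forall>K. compact K \<longrightarrow> uniform_limit K p G sequentially))"

text \<open>Falling factorial (n)_k = n(n-1)...(n-k+1); equals 0 when k > n.\<close>
definition falling :: "nat \<Rightarrow> nat \<Rightarrow> nat" where
  "falling n k = (\<Prod>i<k. (n - i))"

definition series_in_H2bar :: "(nat \<Rightarrow> complex poly) \<Rightarrow> bool" where
  "series_in_H2bar P \<longleftrightarrow> (\<exists>G. (\<forall>z w. (\<lambda>k. poly (P k) z * w ^ k) sums G (z, w)) \<and> H2bar G)"

end

theory Submission
  imports Defs "HOL-Complex_Analysis.Complex_Analysis" "HOL-Computational_Algebra.Fundamental_Theorem_Algebra"
begin

definition stab :: "complex poly \<Rightarrow> bool" where
  "stab q \<longleftrightarrow> (\<forall>t. Im t > 0 \<longrightarrow> poly q t \<noteq> 0)"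

lemma stab_root_factor:
  assumes "stab q" "degree q > 0"
  obtains r q1 where "q = [:-r,1:] * q1" "Im r \<le> 0" "stab q1" "degree q1 < degree q" "q1 \<noteq> 0"
proof -
  have "\<not> constant (poly q)" using assms(2) by (simp add: constant_degree)
  then obtain r where r: "poly q r = 0" using fundamental_theorem_of_algebra by blast
  then obtain q1 where q1: "q = [:-r,1:] * q1" using poly_eq_0_iff_dvd by (metis dvdE)
  have "Im r \<le> 0" using assms(1) r unfolding stab_def by (meson not_le)
  moreover have "stab q1" using assms(1) unfolding stab_def q1 by auto
  moreover have "q1 \<noteq> 0" using q1 assms(2) by auto
  moreover have "degree q1 < degree q"
  proof -
    have "degree q = degree [:-r,1:] + degree q1" unfolding q1 using \<open>q1 \<noteq> 0\<close> by (intro degree_mult_eq) auto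
    then show ?thesis by simp
  qed
  ultimately show ?thesis using q1 that by blast
qed

lemma stab_nonzero: "stab q \<Longrightarrow> q \<noteq> 0"
  unfolding stab_def by (metis complex.sel(2) poly_0 zero_less_one)

lemma stab_logderiv:
  assumes "stab q" "Im t > 0"
  shows "Im (poly (pderiv q) t / poly q t) \<le> 0"
  using assms
proof (induction "degree q" arbitrary: q rule: less_induct)
  case less
  show ?case
  proof (cases "degree q = 0")
    case True
    then have "pderiv q = 0" by (simp add: pderiv_eq_0_iff)
    then show ?thesis by simp
  next
    case False
    then obtain r q1 where q1: "q = [:-r,1:] * q1" "Im r \<le> 0" "stab q1" "degree q1 < degree q"
      by (metis less.prems(1) not_gr0 stab_root_factor)
    have IH: "Im (poly (pderiv q1) t / poly q1 t) \<le> 0" using less q1 by blast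
    have nz1: "poly q1 t \<noteq> 0" using q1(3) less.prems(2) stab_def by blast
    have nz2: "t - r \<noteq> 0" using q1(2) less.prems(2) by auto
    have pq: "poly q t = (t - r) * poly q1 t" unfolding q1(1) by (simp add: algebra_simps)
    have pd: "poly (pderiv q) t = poly q1 t + (t - r) * poly (pderiv q1) t"
      unfolding q1(1) pderiv_mult by (simp add: pderiv_pCons algebra_simps)
    have "poly (pderiv q) t / poly q t = 1 / (t - r) + poly (pderiv q1) t / poly q1 t"
      unfolding pq pd using nz1 nz2 by (simp add: field_simps)
    moreover have "Im (1 / (t - r)) \<le> 0"
    proof -
      have "Im (1/(t-r)) = - Im (t - r) / ((Re (t-r))^2 + (Im (t-r))^2)" by (simp add: Im_divide power2_eq_square)
      moreover have "Im (t - r) > 0" using q1(2) less.prems(2) by simp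
      ultimately show ?thesis by (metis divide_nonpos_nonneg neg_le_0_iff_le less_imp_le add_nonneg_nonneg zero_le_power2)
    qed
    ultimately show ?thesis using IH by simp
  qed
qed

definition LS :: "complex \<Rightarrow> complex poly \<Rightarrow> complex poly" where
  "LS w q = q + smult w (pderiv q)"

lemma stab_LS:
  assumes "stab q" "Im w > 0"
  shows "stab (LS w q)"
  unfolding stab_def
proof (intro allI impI)
  fix t :: complex assume t: "Im t > 0"
  have nz: "poly q t \<noteq> 0" using assms t stab_def by blast
  define \<rho> where "\<rho> = poly (pderiv q) t / poly q t"
  have r: "Im \<rho> \<le> 0" using stab_logderiv assms t \<rho>_def by blast
  have eq: "poly (LS w q) t = poly q t * (1 + w * \<rho>)" using nz by (simp add: LS_def \<rho>_def field_simps)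
  have "1 + w * \<rho> \<noteq> 0"
  proof
    assume "1 + w * \<rho> = 0"
    moreover have "w \<noteq> 0" using assms(2) by auto
    ultimately have "\<rho> = - 1 / w" by (auto simp: field_simps add_eq_0_iff)
    then have "Im \<rho> = Im w / ((Re w)^2 + (Im w)^2)" by (simp add: Im_divide power2_eq_square)
    moreover have "(Re w)^2 + (Im w)^2 > 0" using assms(2) by (simp add: add_nonneg_pos)
    ultimately have "Im \<rho> > 0" using assms(2) by (simp add: divide_pos_pos)
    with r show False by simp
  qed
  then show "poly (LS w q) t \<noteq> 0" using eq nz by simp
qed

lemma stab_LS_pow:
  assumes "stab q" "Im w > 0"
  shows "stab ((LS w ^^ n) q)"
  by (induction n) (auto simp: assms stab_LS)

definition Pr :: "(nat \<Rightarrow> complex) \<Rightarrow> nat \<Rightarrow> complex poly" where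
  "Pr u d = (\<Prod>i<d. [:1, - u i:])"

fun e2 :: "(nat \<Rightarrow> complex) \<Rightarrow> nat \<Rightarrow> complex" where
  "e2 u 0 = 0"
| "e2 u (Suc d) = e2 u d + u d * (\<Sum>i<d. u i)"

lemma mult_lin_coeff:
  fixes p :: "complex poly"
  shows "coeff (p * [:1, -a:]) 0 = coeff p 0"
  "coeff (p * [:1, -a:]) (Suc n) = coeff p (Suc n) - a * coeff p n"
proof -
  have e: "p * [:1, -a:] = p + pCons 0 (smult (-a) p)"
    by (simp add: mult_pCons_right)
  show "coeff (p * [:1, -a:]) 0 = coeff p 0" unfolding e by simp
  show "coeff (p * [:1, -a:]) (Suc n) = coeff p (Suc n) - a * coeff p n" unfolding e by simp
qed

lemma Pr_coeffs:
  "coeff (Pr u d) 0 = 1 \<and> coeff (Pr u d) 1 = - (\<Sum>i<d. u i) \<and> coeff (Pr u d) 2 = e2 u d"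
proof (induction d)
  case 0
  then show ?case by (simp add: Pr_def numeral_2_eq_2)
next
  case (Suc d)
  have e: "Pr u (Suc d) = Pr u d * [:1, - u d:]" by (simp add: Pr_def)
  show ?case using Suc unfolding e numeral_2_eq_2 One_nat_def mult_lin_coeff
    by (simp add: algebra_simps)
qed

lemma poly_Pr: "poly (Pr u d) s = (\<Prod>i<d. 1 - u i * s)"
  by (simp add: Pr_def poly_prod mult.commute)

lemma stab_factor:
  assumes "stab q" "poly q 0 \<noteq> 0"
  shows "\<exists>u d. (\<forall>i<d. Im (u i) \<ge> 0) \<and> q = smult (poly q 0) (Pr u d)"
  using assms
proof (induction "degree q" arbitrary: q rule: less_induct)
  case less
  show ?case
  proof (cases "degree q = 0")
    case True
    then obtain c where "q = [:c:]" by (meson degree_eq_zeroE)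
    then show ?thesis by (intro exI[of _ "\<lambda>_. 0"] exI[of _ 0]) (simp add: Pr_def)
  next
    case False
    then obtain r q1 where q1: "q = [:-r,1:] * q1" "Im r \<le> 0" "stab q1" "degree q1 < degree q"
      by (metis less.prems(1) not_gr0 stab_root_factor)
    have p0: "poly q 0 = - r * poly q1 0" unfolding q1(1) by simp
    then have r0: "r \<noteq> 0" using less.prems(2) by auto
    define q2 where "q2 = smult (-r) q1"
    define v where "v = 1 / r"
    have "stab q2" using q1(3) r0 unfolding stab_def q2_def by simp
    moreover have "degree q2 < degree q" using q1(4) r0 by (simp add: q2_def)
    moreover have "poly q2 0 = poly q 0" using p0 by (simp add: q2_def)
    ultimately have "\<exists>u d. (\<forall>i<d. Im (u i) \<ge> 0) \<and> q2 = smult (poly q2 0) (Pr u d)"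
      using less.hyps[of q2] less.prems(2) by simp
    then obtain u d where ud: "\<forall>i<d. Im (u i) \<ge> 0" "q2 = smult (poly q 0) (Pr u d)"
      using \<open>poly q2 0 = poly q 0\<close> by auto
    have qe: "q = q2 * [:1, -v:]"
    proof -
      have "[:-r,1:] = smult (-r) [:1, -v:]" using r0 by (simp add: v_def)
      then show ?thesis unfolding q1(1) q2_def by (simp add: mult.commute)
    qed
    have Imv: "Im v \<ge> 0"
    proof -
      have "Im v = - Im r / ((Re r)^2 + (Im r)^2)" by (simp add: v_def Im_divide power2_eq_square)
      moreover have "Im r / ((Re r)^2 + (Im r)^2) \<le> 0"
        by (rule divide_nonpos_nonneg) (use q1(2) in auto)
      ultimately show ?thesis by simp
    qed
    define u' where "u' = u(d := v)"
    have "Pr u' (Suc d) = Pr u d * [:1, -v:]"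
    proof -
      have "Pr u' d = Pr u d" unfolding Pr_def u'_def by (intro prod.cong) auto
      then show ?thesis by (simp add: Pr_def u'_def)
    qed
    moreover have "q = smult (poly q 0) (Pr u d * [:1, -v:])"
      using qe ud(2) by (simp only: mult_smult_left)
    ultimately have "q = smult (poly q 0) (Pr u' (Suc d))" by simp
    moreover have "\<forall>i<Suc d. Im (u' i) \<ge> 0" using ud(1) Imv by (simp add: u'_def less_Suc_eq)
    ultimately show ?thesis by blast
  qed
qed

lemma sumsq_e2: "(\<Sum>i<d. (u i)^2) = (\<Sum>i<d. u i)^2 - 2 * e2 u d"
  by (induction d) (simp_all add: algebra_simps power2_eq_square sum_distrib_left)

lemma sum_sq_le_sq_sum:
  fixes y :: "nat \<Rightarrow> real"
  assumes "\<forall>i<d. y i \<ge> 0"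
  shows "(\<Sum>i<d. (y i)^2) \<le> (\<Sum>i<d. y i)^2"
  using assms
proof (induction d)
  case 0 then show ?case by simp
next
  case (Suc d)
  have "(\<Sum>i<d. y i) \<ge> 0" using Suc.prems by (intro sum_nonneg) simp
  moreover have "y d \<ge> 0" using Suc.prems by simp
  ultimately have "y d * (2 * (\<Sum>i<d. y i)) \<ge> 0" by simp
  have "(\<Sum>i<Suc d. (y i)^2) = (\<Sum>i<d. (y i)^2) + (y d)^2" by simp
  moreover have "(\<Sum>i<Suc d. y i)^2 = (\<Sum>i<d. y i)^2 + (y d)^2 + y d * (2 * (\<Sum>i<d. y i))"
    by (simp add: power2_eq_square algebra_simps)
  moreover have "(\<Sum>i<d. (y i)^2) \<le> (\<Sum>i<d. y i)^2" using Suc.prems by (intro Suc.IH) simp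
  ultimately show ?case using \<open>y d * (2 * (\<Sum>i<d. y i)) \<ge> 0\<close> by linarith
qed

lemma normsq_bound:
  assumes "\<forall>i<d. Im (u i) \<ge> 0"
  shows "(\<Sum>i<d. (cmod (u i))^2) \<le> 3 * (cmod (\<Sum>i<d. u i))^2 + 2 * cmod (e2 u d)"
proof -
  have a: "(cmod z)^2 = Re (z^2) + 2 * (Im z)^2" for z
    by (simp add: cmod_power2 Re_power2)
  have e1: "(\<Sum>i<d. (cmod (u i))^2) = Re (\<Sum>i<d. (u i)^2) + 2 * (\<Sum>i<d. (Im (u i))^2)"
    by (simp add: a sum.distrib sum_distrib_left)
  have e2: "Re (\<Sum>i<d. (u i)^2) \<le> cmod (\<Sum>i<d. (u i)^2)" by (rule complex_Re_le_cmod)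
  have e3: "cmod (\<Sum>i<d. (u i)^2) \<le> (cmod (\<Sum>i<d. u i))^2 + 2 * cmod (e2 u d)"
  proof -
    have "cmod ((\<Sum>i<d. u i)^2 - 2 * e2 u d) \<le> cmod ((\<Sum>i<d. u i)^2) + cmod (2 * e2 u d)"
      by (rule norm_triangle_ineq4)
    then show ?thesis unfolding sumsq_e2 by (simp add: norm_power norm_mult)
  qed
  have e4: "(\<Sum>i<d. (Im (u i))^2) \<le> (\<Sum>i<d. Im (u i))^2"
    using assms by (rule sum_sq_le_sq_sum)
  have e5: "(\<Sum>i<d. Im (u i)) = Im (\<Sum>i<d. u i)" by (simp add: Im_sum)
  have e6: "(Im (\<Sum>i<d. u i))^2 \<le> (cmod (\<Sum>i<d. u i))^2"
    using abs_Im_le_cmod[of "\<Sum>i<d. u i"] by (simp only: abs_le_square_iff[symmetric] abs_norm_cancel)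
  have e45: "(\<Sum>i<d. (Im (u i))^2) \<le> (Im (\<Sum>i<d. u i))^2" using e4 unfolding e5 .
  show ?thesis using e1 e2 e3 e45 e6 by linarith
qed

lemma one_minus_bound: "cmod (1 - x) \<le> exp (- Re x + (cmod x)^2)"
proof -
  have "(cmod (1 - x))^2 = 1 - 2 * Re x + (cmod x)^2"
    unfolding cmod_power2 by (simp add: power2_eq_square algebra_simps)
  also have "\<dots> \<le> 1 + 2 * (- Re x + (cmod x)^2)" by simp
  also have "\<dots> \<le> exp (2 * (- Re x + (cmod x)^2))" by (rule exp_ge_add_one_self)
  also have "\<dots> = (exp (- Re x + (cmod x)^2))^2" by (simp add: exp_double[symmetric])
  finally show ?thesis by (rule power2_le_imp_le) simp
qed

lemma poly_Pr_bound:
  "cmod (poly (Pr u d) s) \<le> exp (Re (- (\<Sum>i<d. u i) * s) + (\<Sum>i<d. (cmod (u i))^2) * (cmod s)^2)"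
proof -
  have "cmod (poly (Pr u d) s) = (\<Prod>i<d. cmod (1 - u i * s))" by (simp add: poly_Pr prod_norm)
  also have "\<dots> \<le> (\<Prod>i<d. exp (- Re (u i * s) + (cmod (u i * s))^2))"
    by (intro prod_mono conjI one_minus_bound norm_ge_zero)
  also have "\<dots> = exp (\<Sum>i<d. - Re (u i * s) + (cmod (u i * s))^2)" by (simp add: exp_sum)
  also have "(\<Sum>i<d. - Re (u i * s) + (cmod (u i * s))^2) = Re (- (\<Sum>i<d. u i) * s) + (\<Sum>i<d. (cmod (u i))^2) * (cmod s)^2"
  proof -
    have "- (\<Sum>i<d. u i) * s = (\<Sum>i<d. - (u i * s))" by (simp add: sum_distrib_right sum_negf)
    then have "Re (- (\<Sum>i<d. u i) * s) = (\<Sum>i<d. - Re (u i * s))" by (simp only: Re_sum uminus_complex.sel)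
    moreover have "(\<Sum>i<d. (cmod (u i * s))^2) = (\<Sum>i<d. (cmod (u i))^2) * (cmod s)^2"
      by (simp add: sum_distrib_right norm_mult power_mult_distrib)
    ultimately show ?thesis by (simp add: sum.distrib)
  qed
  finally show ?thesis .
qed

lemma stab_bound:
  assumes "stab q" "poly q 0 \<noteq> 0"
  shows "cmod (poly q s) \<le> cmod (coeff q 0) * exp (cmod (coeff q 1 / coeff q 0) * cmod s
            + (3 * (cmod (coeff q 1 / coeff q 0))^2 + 2 * cmod (coeff q 2 / coeff q 0)) * (cmod s)^2)"
proof -
  obtain u d where ud: "\<forall>i<d. Im (u i) \<ge> 0" "q = smult (poly q 0) (Pr u d)"
    using stab_factor assms by blast
  define c0 where "c0 = poly q 0"
  have c0: "coeff q 0 = c0" by (simp add: c0_def poly_0_coeff_0)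
  have c0nz: "c0 \<noteq> 0" using assms(2) c0_def by simp
  have "coeff q 1 = c0 * - (\<Sum>i<d. u i)" using Pr_coeffs[of u d]
    by (subst ud(2)) (simp add: c0_def)
  then have c1: "coeff q 1 / c0 = - (\<Sum>i<d. u i)" using c0nz by simp
  have "coeff q 2 = c0 * e2 u d" using Pr_coeffs[of u d]
    by (subst ud(2)) (simp add: c0_def)
  then have c2: "coeff q 2 / c0 = e2 u d" using c0nz by simp
  have "cmod (poly q s) = cmod c0 * cmod (poly (Pr u d) s)"
    by (subst ud(2)) (simp add: c0_def norm_mult)
  also have "\<dots> \<le> cmod c0 * exp (Re (- (\<Sum>i<d. u i) * s) + (\<Sum>i<d. (cmod (u i))^2) * (cmod s)^2)"
    by (intro mult_left_mono poly_Pr_bound norm_ge_zero)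
  also have "\<dots> \<le> cmod c0 * exp (cmod (\<Sum>i<d. u i) * cmod s
            + (3 * (cmod (\<Sum>i<d. u i))^2 + 2 * cmod (e2 u d)) * (cmod s)^2)"
  proof (intro mult_left_mono norm_ge_zero exp_mono add_mono mult_right_mono zero_le_power2)
    show "Re (- (\<Sum>i<d. u i) * s) \<le> cmod (\<Sum>i<d. u i) * cmod s"
      using complex_Re_le_cmod[of "- (\<Sum>i<d. u i) * s"] by (simp only: norm_mult norm_minus_cancel)
    show "(\<Sum>i<d. (cmod (u i))^2) \<le> 3 * (cmod (\<Sum>i<d. u i))^2 + 2 * cmod (e2 u d)"
      using ud(1) by (rule normsq_bound)
  qed
  also have "\<dots> = cmod (coeff q 0) * exp (cmod (coeff q 1 / coeff q 0) * cmod s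
            + (3 * (cmod (coeff q 1 / coeff q 0))^2 + 2 * cmod (coeff q 2 / coeff q 0)) * (cmod s)^2)"
    by (simp only: c0 c1 c2 norm_minus_cancel)
  finally show ?thesis .
qed

lemma series_coeff_bound:
  fixes e :: "nat \<Rightarrow> complex"
  assumes sm: "\<And>w. (\<lambda>k. e k * w^k) sums E w" and bd: "\<And>w. cmod w = 1 \<Longrightarrow> cmod (E w) \<le> B"
  shows "cmod (e k) \<le> B"
proof -
  define F where "F = Abs_fps e"
  have "ereal (norm (2::complex)) \<le> conv_radius e"
    by (rule conv_radius_geI) (use sm sums_summable in blast)
  then have rad: "ereal 2 \<le> fps_conv_radius F" by (simp add: F_def fps_conv_radius_def)
  have ev: "eval_fps F = E"
    by (rule ext) (simp add: eval_fps_def F_def sums_unique[OF sm, symmetric])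
  have pos: "0 < fps_conv_radius F" using rad by (meson ereal_less(2) less_le_trans zero_less_numeral)
  have "fps_nth F k = (deriv ^^ k) (eval_fps F) 0 / fact k" by (rule fps_nth_conv_deriv[OF pos])
  then have ek: "e k = (deriv ^^ k) E 0 / fact k" unfolding ev by (simp add: F_def)
  have sub: "cball (0::complex) 1 \<subseteq> eball 0 (fps_conv_radius F)"
  proof (rule subsetI)
    fix x :: complex assume "x \<in> cball 0 1"
    then have "ereal (norm x) < ereal 2" by simp
    then have "ereal (norm x) < fps_conv_radius F" using rad by (rule order.strict_trans2)
    then show "x \<in> eball 0 (fps_conv_radius F)" unfolding eball_def by (simp add: dist_norm)
  qed
  have "norm ((deriv ^^ k) E 0) \<le> fact k * B / 1 ^ k"
  proof (rule Cauchy_inequality)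
    show "E holomorphic_on ball 0 1" unfolding ev[symmetric]
      by (rule holomorphic_on_eval_fps) (use sub in auto)
    show "continuous_on (cball 0 1) E" unfolding ev[symmetric]
      by (rule holomorphic_on_imp_continuous_on, rule holomorphic_on_eval_fps) (use sub in auto)
  qed (use bd in auto)
  then show ?thesis unfolding ek by (simp add: norm_divide field_simps)
qed

lemma poly_sums: "(\<lambda>k::nat. coeff p k * (z::complex)^k) sums poly p z"
proof -
  have "(\<lambda>k. coeff p k * z^k) sums (\<Sum>k\<in>{..degree p}. coeff p k * z^k)"
    by (rule sums_finite) (auto simp: coeff_eq_0)
  then show ?thesis by (simp add: poly_altdef)
qed

lemma poly_coeff_bound:
  fixes p :: "complex poly"
  assumes r: "r > 0" and bd: "\<And>s. cmod s = r \<Longrightarrow> cmod (poly p s) \<le> B"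
  shows "cmod (coeff p k) * r^k \<le> B"
proof -
  have "cmod (coeff p k * of_real r ^ k) \<le> B"
  proof (rule series_coeff_bound[where E = "\<lambda>w. poly p (of_real r * w)"])
    fix w :: complex
    show "(\<lambda>k. coeff p k * of_real r ^ k * w ^ k) sums poly p (of_real r * w)"
      using poly_sums[of p "of_real r * w"] by (simp add: power_mult_distrib mult.assoc)
  next
    fix w :: complex assume "cmod w = 1"
    then show "cmod (poly p (of_real r * w)) \<le> B" using r by (intro bd) (simp add: norm_mult)
  qed
  then show ?thesis using r by (simp add: norm_mult norm_power)
qed

definition ev2 :: "complex poly poly \<Rightarrow> complex \<Rightarrow> complex \<Rightarrow> complex" where
  "ev2 Q z w = poly (poly Q [:w:]) z"

lemma ev2_map: "ev2 Q z w = poly (map_poly (\<lambda>c. poly c z) Q) w"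
proof (induction Q)
  case 0 then show ?case by (simp add: ev2_def)
next
  case (pCons a Q)
  then show ?case by (simp add: ev2_def map_poly_pCons)
qed

lemma poly_sum_le:
  fixes p :: "'a::comm_semiring_1 poly"
  assumes "degree p \<le> N"
  shows "poly p x = (\<Sum>i\<le>N. coeff p i * x^i)"
proof -
  have "poly p x = (\<Sum>i\<le>degree p. coeff p i * x^i)" by (rule poly_altdef)
  also have "\<dots> = (\<Sum>i\<le>N. coeff p i * x^i)"
    by (rule sum.mono_neutral_left) (use assms in \<open>auto simp: coeff_eq_0\<close>)
  finally show ?thesis .
qed

lemma deg_map_le: "degree (map_poly (\<lambda>c. poly c z) Q) \<le> degree Q"
  by (rule degree_le) (auto simp: coeff_map_poly coeff_eq_0)

lemma ev2_sum: "ev2 Q z w = (\<Sum>j\<le>degree Q. poly (coeff Q j) z * w^j)"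
proof -
  have "degree (map_poly (\<lambda>c. poly c z) Q) \<le> degree Q" by (rule deg_map_le)
  then show ?thesis unfolding ev2_map by (subst poly_sum_le) (auto simp: coeff_map_poly)
qed

lemma ev2_coeff0: "ev2 Q z 0 = poly (coeff Q 0) z"
  unfolding ev2_map by (simp add: poly_0_coeff_0 coeff_map_poly)

lemma ev2_sums: "(\<lambda>k. poly (coeff Q k) z * w^k) sums ev2 Q z w"
  using poly_sums[of "map_poly (\<lambda>c. poly c z) Q" w] unfolding ev2_map by (simp add: coeff_map_poly)

lemma continuous_on_ev2 [continuous_intros]:
  assumes "continuous_on A f" "continuous_on A g"
  shows "continuous_on A (\<lambda>x. ev2 Q (f x) (g x))"
  unfolding ev2_sum by (intro continuous_intros assms)

lemma holomorphic_ev2_w [holomorphic_intros]: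
  assumes "g holomorphic_on A"
  shows "(\<lambda>x. ev2 Q z (g x)) holomorphic_on A"
  unfolding ev2_map by (intro holomorphic_intros assms)

lemma holomorphic_ev2_z [holomorphic_intros]:
  assumes "g holomorphic_on A"
  shows "(\<lambda>x. ev2 Q (g x) w) holomorphic_on A"
  unfolding ev2_def by (intro holomorphic_intros assms)

definition pol2 :: "(complex \<times> complex \<Rightarrow> complex) \<Rightarrow> bool" where
  "pol2 f \<longleftrightarrow> (\<exists>Q. \<forall>z w. f (z, w) = ev2 Q z w)"

named_theorems pol2_intros

lemma pol2_const [pol2_intros]: "pol2 (\<lambda>x. c)"
  unfolding pol2_def by (intro exI[of _ "[:[:c:]:]"]) (simp add: ev2_def)

lemma pol2_fst [pol2_intros]: "pol2 (\<lambda>x. poly p (fst x))"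
  unfolding pol2_def by (intro exI[of _ "[:p:]"]) (simp add: ev2_def)

lemma pol2_snd [pol2_intros]: "pol2 (\<lambda>x. snd x)"
  unfolding pol2_def by (intro exI[of _ "[:0, 1:]"]) (simp add: ev2_def)

lemma pol2_fst' [pol2_intros]: "pol2 (\<lambda>x. fst x)"
  unfolding pol2_def by (intro exI[of _ "[:[:0,1:]:]"]) (simp add: ev2_def)

lemma pol2_add [pol2_intros]: "pol2 f \<Longrightarrow> pol2 g \<Longrightarrow> pol2 (\<lambda>x. f x + g x)"
  unfolding pol2_def by (metis ev2_def poly_add)

lemma pol2_mult [pol2_intros]: "pol2 f \<Longrightarrow> pol2 g \<Longrightarrow> pol2 (\<lambda>x. f x * g x)"
  unfolding pol2_def by (metis ev2_def poly_mult)

lemma pol2_pow [pol2_intros]: "pol2 f \<Longrightarrow> pol2 (\<lambda>x. f x ^ n)"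
  by (induction n) (auto intro: pol2_const pol2_mult)

lemma pol2_sum [pol2_intros]:
  assumes "\<And>i. i \<in> A \<Longrightarrow> pol2 (f i)"
  shows "pol2 (\<lambda>x. \<Sum>i\<in>A. f i x)"
  using assms
proof (induction A rule: infinite_finite_induct)
  case (infinite A) then show ?case by (simp add: pol2_const)
next
  case empty then show ?case by (simp add: pol2_const)
next
  case (insert a A) then show ?case by (simp add: pol2_add)
qed

lemma pol2_imp_is_poly2:
  assumes "pol2 f"
  shows "is_poly2 f"
proof -
  obtain Q where Q: "\<And>z w. f (z, w) = ev2 Q z w" using assms pol2_def by blast
  define N where "N = Suc (degree Q + (\<Sum>j\<le>degree Q. degree (coeff Q j)))"
  have dQ: "degree Q < N" by (simp add: N_def)
  have dc: "degree (coeff Q j) < N" for j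
  proof (cases "j \<le> degree Q")
    case True
    then have "degree (coeff Q j) \<le> (\<Sum>j\<le>degree Q. degree (coeff Q j))"
      by (intro member_le_sum) auto
    then show ?thesis by (simp add: N_def)
  next
    case False then show ?thesis by (simp add: coeff_eq_0 N_def)
  qed
  have "f (z, w) = (\<Sum>i<N. \<Sum>j<N. coeff (coeff Q j) i * z ^ i * w ^ j)" for z w
  proof -
    have "f (z, w) = (\<Sum>j<N. poly (coeff Q j) z * w^j)"
    proof -
      have "f (z,w) = poly (map_poly (\<lambda>c. poly c z) Q) w" using Q ev2_map by simp
      also have "\<dots> = (\<Sum>j\<le>N - 1. coeff (map_poly (\<lambda>c. poly c z) Q) j * w^j)"
        by (rule poly_sum_le) (use dQ deg_map_le[of z Q] in linarith)
      also have "{..N - 1} = {..<N}" using dQ by auto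
      finally show ?thesis by (simp add: coeff_map_poly)
    qed
    also have "\<dots> = (\<Sum>j<N. (\<Sum>i<N. coeff (coeff Q j) i * z^i) * w^j)"
    proof (intro sum.cong refl)
      fix j
      have "poly (coeff Q j) z = (\<Sum>i\<le>N - 1. coeff (coeff Q j) i * z^i)"
        by (rule poly_sum_le) (use dc[of j] in linarith)
      also have "{..N - 1} = {..<N}" using dQ by auto
      finally show "poly (coeff Q j) z * w^j = (\<Sum>i<N. coeff (coeff Q j) i * z^i) * w^j" by simp
    qed
    also have "\<dots> = (\<Sum>i<N. \<Sum>j<N. coeff (coeff Q j) i * z ^ i * w ^ j)"
      by (subst sum.swap) (simp add: sum_distrib_right)
    finally show ?thesis .
  qed
  then show ?thesis unfolding is_poly2_def by (intro exI[of _ N] exI[of _ "\<lambda>i j. coeff (coeff Q j) i"]) blast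
qed

lemma is_poly2_imp_pol2:
  assumes "is_poly2 f"
  shows "pol2 f"
proof -
  obtain N c where fc: "\<And>z w. f (z, w) = (\<Sum>i<N. \<Sum>j<N. c i j * z ^ i * w ^ j)"
    using assms is_poly2_def by blast
  have "pol2 (\<lambda>x. \<Sum>i<N. \<Sum>j<N. c i j * fst x ^ i * snd x ^ j)"
    by (intro pol2_intros)
  moreover have "f = (\<lambda>x. \<Sum>i<N. \<Sum>j<N. c i j * fst x ^ i * snd x ^ j)"
    using fc by (auto simp: fun_eq_iff)
  ultimately show ?thesis by simp
qed

lemma is_poly2_pol2: "is_poly2 f \<longleftrightarrow> pol2 f"
  using is_poly2_imp_pol2 pol2_imp_is_poly2 by blast

lemma uhp_infinite: "infinite {t::complex. Im t > 0}"
proof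
  assume fin: "finite {t::complex. Im t > 0}"
  have "range (\<lambda>n::nat. \<i> * (of_nat n + 1)) \<subseteq> {t::complex. Im t > 0}"
    by auto
  moreover have "infinite (range (\<lambda>n::nat. \<i> * (of_nat n + 1)))"
    by (rule range_inj_infinite) (auto simp: inj_def)
  ultimately show False using fin finite_subset by blast
qed

lemma poly_zero_uhp:
  fixes p :: "complex poly"
  assumes "\<And>t. Im t > 0 \<Longrightarrow> poly p t = 0"
  shows "p = 0"
proof (rule ccontr)
  assume "p \<noteq> 0"
  then have "finite {x. poly p x = 0}" by (rule poly_roots_finite)
  moreover have "{t::complex. Im t > 0} \<subseteq> {x. poly p x = 0}" using assms by auto
  ultimately show False using uhp_infinite finite_subset by blast
qed

lemma pol2_zero_uhp:
  assumes "pol2 f" "\<And>z w. Im z > 0 \<Longrightarrow> Im w > 0 \<Longrightarrow> f (z, w) = 0"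
  shows "f x = 0"
proof -
  obtain Q where Q: "\<And>z w. f (z, w) = ev2 Q z w" using assms pol2_def by blast
  have A: "ev2 Q z w = 0" if "Im z > 0" for z w
  proof -
    have "map_poly (\<lambda>c. poly c z) Q = 0"
      by (rule poly_zero_uhp) (use assms(2) Q that in \<open>auto simp: ev2_map\<close>)
    then show ?thesis by (simp add: ev2_map)
  qed
  have B: "ev2 Q z w = 0" for z w
  proof -
    have "poly Q [:w:] = 0"
      by (rule poly_zero_uhp) (use A in \<open>auto simp: ev2_def\<close>)
    then show ?thesis by (simp add: ev2_def)
  qed
  show ?thesis using B Q by (cases x) auto
qed

lemma pderiv_sum': "pderiv (\<Sum>x\<in>A. f x) = (\<Sum>x\<in>A. pderiv (f x))"
  using higher_pderiv_sum[of 1 f A] by simp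

lemma smult_sum_right: "smult a (\<Sum>i\<in>S. f i) = (\<Sum>i\<in>S. smult a (f i))"
  by (induction S rule: infinite_finite_induct) (simp_all add: smult_add_right)

lemma LS_binom:
  "(LS w ^^ n) q = (\<Sum>k\<le>n. smult (of_nat (n choose k) * w^k) ((pderiv^^k) q))"
proof (induction n)
  case 0
  then show ?case by simp
next
  case (Suc n)
  define T where "T k = (pderiv^^k) q" for k
  define f where "f k = smult (of_nat (n choose k) * w^k) (T k)" for k
  have IH: "(LS w ^^ n) q = (\<Sum>k\<le>n. f k)" using Suc by (simp add: f_def T_def)
  have dT: "pderiv (T k) = T (Suc k)" for k by (simp add: T_def)
  have "(LS w ^^ Suc n) q = (\<Sum>k\<le>n. f k) + (\<Sum>k\<le>n. smult (of_nat (n choose k) * w^Suc k) (T (Suc k)))"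
    by (simp add: IH LS_def pderiv_sum' f_def pderiv_smult dT smult_sum_right ac_simps)
  also have "(\<Sum>k\<le>n. f k) = f 0 + (\<Sum>i\<le>n. f (Suc i))"
  proof -
    have "(\<Sum>k\<le>Suc n. f k) = (\<Sum>k\<le>n. f k)" by (simp add: f_def)
    moreover have "(\<Sum>k\<le>Suc n. f k) = f 0 + (\<Sum>i\<le>n. f (Suc i))" by (rule sum.atMost_Suc_shift)
    ultimately show ?thesis by simp
  qed
  also have "f 0 + (\<Sum>i\<le>n. f (Suc i)) + (\<Sum>k\<le>n. smult (of_nat (n choose k) * w^Suc k) (T (Suc k)))
     = smult (of_nat (Suc n choose 0) * w^0) (T 0) + (\<Sum>i\<le>n. smult (of_nat (Suc n choose Suc i) * w^Suc i) (T (Suc i)))"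
    by (simp add: f_def sum.distrib[symmetric] smult_add_left[symmetric] algebra_simps)
  also have "\<dots> = (\<Sum>k\<le>Suc n. smult (of_nat (Suc n choose k) * w^k) (T k))"
    by (rule sum.atMost_Suc_shift[symmetric])
  finally show ?case by (simp add: T_def)
qed

lemma coeff_hpderiv0: "coeff ((pderiv^^k) p) 0 = of_nat (fact k) * coeff p k"
proof (induction k arbitrary: p)
  case 0 then show ?case by simp
next
  case (Suc k)
  have "(pderiv^^Suc k) p = (pderiv^^k) (pderiv p)" by (simp only: funpow_Suc_right comp_def)
  then show ?case using Suc[of "pderiv p"] by (simp add: coeff_pderiv algebra_simps)
qed

lemma falling_Suc: "falling n (Suc k) = falling n k * (n - k)"
  by (simp add: falling_def)

lemma falling_binom: "falling n k = (n choose k) * fact k"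
proof (induction n arbitrary: k)
  case 0 then show ?case by (cases k) (simp_all add: falling_def)
next
  case (Suc n)
  show ?case
  proof (cases k)
    case 0 then show ?thesis by (simp add: falling_def)
  next
    case (Suc j)
    have "falling (Suc n) (Suc j) = Suc n * falling n j"
      unfolding falling_def prod.lessThan_Suc_shift by simp
    also have "\<dots> = Suc n * ((n choose j) * fact j)" using Suc.IH by simp
    also have "\<dots> = (Suc n choose Suc j) * fact (Suc j)"
      using Suc_times_binomial_eq[of n j] by (simp add: algebra_simps)
    finally show ?thesis using Suc by simp
  qed
qed

lemma pderiv_map_ev: "pderiv (map_poly (\<lambda>c. poly c z) Q) = map_poly (\<lambda>c. poly c z) (pderiv Q)"
  by (rule poly_eqI) (simp add: coeff_pderiv coeff_map_poly)

lemma hpderiv_map_ev: "(pderiv^^k) (map_poly (\<lambda>c. poly c z) Q) = map_poly (\<lambda>c. poly c z) ((pderiv^^k) Q)"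
  by (induction k) (simp_all add: pderiv_map_ev)

definition Fd :: "complex poly poly \<Rightarrow> nat \<Rightarrow> real \<Rightarrow> complex \<Rightarrow> complex \<Rightarrow> complex" where
  "Fd Q n d z w = (\<Sum>k\<le>n. of_nat (n choose k) * w^k * ev2 ((pderiv^^k) Q) z (of_real d * w))"

lemma Fd_eq: "Fd Q n d z w = poly ((LS w ^^ n) (map_poly (\<lambda>c. poly c z) Q)) (of_real d * w)"
  unfolding LS_binom Fd_def by (simp add: poly_sum hpderiv_map_ev ev2_map)

lemma Fd_nz:
  assumes st: "\<And>z w. Im z > 0 \<Longrightarrow> Im w > 0 \<Longrightarrow> ev2 Q z w \<noteq> 0"
    and "d > 0" "Im z > 0" "Im w > 0"
  shows "Fd Q n d z w \<noteq> 0"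
proof -
  have "stab (map_poly (\<lambda>c. poly c z) Q)"
    unfolding stab_def using st assms(3) by (simp add: ev2_map[symmetric])
  then have "stab ((LS w ^^ n) (map_poly (\<lambda>c. poly c z) Q))" using assms(4) by (rule stab_LS_pow)
  moreover have "Im (of_real d * w) > 0" using assms by simp
  ultimately show ?thesis unfolding Fd_eq stab_def by blast
qed

lemma poly_fact: "poly (fact n) z = (fact n :: complex)"
  by (metis of_nat_fact poly_of_nat)

lemma Fd_0: "Fd Q n 0 z w = (\<Sum>k\<le>n. of_nat (falling n k) * poly (coeff Q k) z * w^k)"
  unfolding Fd_def
  by (intro sum.cong refl) (simp add: ev2_coeff0 coeff_hpderiv0 falling_binom poly_fact algebra_simps)

lemma Fd_cont: "continuous_on UNIV (\<lambda>x::real \<times> complex \<times> complex. Fd Q n (fst x) (fst (snd x)) (snd (snd x)))"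
  unfolding Fd_def by (intro continuous_intros)

lemma unif_from_cont:
  fixes \<Phi> :: "real \<times> 'b::metric_space \<Rightarrow> complex"
  assumes "continuous_on UNIV \<Phi>" "compact K"
  shows "uniform_limit K (\<lambda>j x. \<Phi> (1 / real (Suc j), x)) (\<lambda>x. \<Phi> (0, x)) sequentially"
proof -
  have "compact ({0..1::real} \<times> K)" using assms(2) by (intro compact_Times compact_Icc)
  moreover have "continuous_on ({0..1} \<times> K) \<Phi>" using assms(1) continuous_on_subset by blast
  ultimately have uc: "uniformly_continuous_on ({0..1} \<times> K) \<Phi>"
    using compact_uniformly_continuous by blast
  show ?thesis unfolding uniform_limit_iff
  proof (intro allI impI)
    fix e :: real assume "e > 0"
    then obtain d where d: "d > 0" "\<And>x x'. x \<in> {0..1} \<times> K \<Longrightarrow> x' \<in> {0..1} \<times> K \<Longrightarrow> dist x' x < d \<Longrightarrow> dist (\<Phi> x') (\<Phi> x) < e"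
      using uc unfolding uniformly_continuous_on_def by metis
    obtain N where N: "1 / real (Suc N) < d"
      using d(1) by (metis nat_approx_posE of_nat_Suc)
    show "\<forall>\<^sub>F j in sequentially. \<forall>x\<in>K. dist (\<Phi> (1 / real (Suc j), x)) (\<Phi> (0, x)) < e"
      unfolding eventually_sequentially
    proof (intro exI[of _ N] allI impI ballI)
      fix j x assume j: "N \<le> j" and x: "x \<in> K"
      have "1 / real (Suc j) \<le> 1 / real (Suc N)" using j by (simp add: frac_le)
      then have lt: "1 / real (Suc j) < d" using N by linarith
      have "dist (1 / real (Suc j), x) (0, x) = 1 / real (Suc j)" by (simp add: dist_Pair_Pair)
      then have "dist (1 / real (Suc j), x) (0, x) < d" using lt by simp
      moreover have "(1 / real (Suc j), x) \<in> {0..1::real} \<times> K" "(0::real, x) \<in> {0..1::real} \<times> K" using x by auto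
      ultimately show "dist (\<Phi> (1 / real (Suc j), x)) (\<Phi> (0, x)) < e"
        using d(2) by blast
    qed
  qed
qed

lemma ulim_slice_w:
  assumes ul: "\<And>K. compact K \<Longrightarrow> uniform_limit K f F sequentially" and "compact K"
  shows "uniform_limit K (\<lambda>n w. f n (z, w)) (\<lambda>w. F (z, w)) sequentially"
proof -
  have "uniform_limit ({z} \<times> K) f F sequentially" using assms by (intro ul compact_Times) auto
  then show ?thesis unfolding uniform_limit_iff by (force elim!: eventually_mono)
qed

lemma ulim_slice_z:
  assumes ul: "\<And>K. compact K \<Longrightarrow> uniform_limit K f F sequentially" and "compact K"
  shows "uniform_limit K (\<lambda>n z. f n (z, w)) (\<lambda>z. F (z, w)) sequentially"
proof -
  have "uniform_limit (K \<times> {w}) f F sequentially" using assms by (intro ul compact_Times) auto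
  then show ?thesis unfolding uniform_limit_iff by (force elim!: eventually_mono)
qed

lemma uhp_open: "open {t::complex. Im t > 0}" by (rule open_halfspace_Im_gt)
lemma uhp_conn: "connected {t::complex. Im t > 0}" by (intro convex_connected convex_halfspace_Im_gt)

lemma hurwitz2:
  fixes f :: "nat \<Rightarrow> complex \<times> complex \<Rightarrow> complex"
  assumes ul: "\<And>K. compact K \<Longrightarrow> uniform_limit K f F sequentially"
    and hf1: "\<And>n z. (\<lambda>w. f n (z, w)) holomorphic_on {t. Im t > 0}"
    and hf2: "\<And>n w. (\<lambda>z. f n (z, w)) holomorphic_on {t. Im t > 0}"
    and hF1: "\<And>z. (\<lambda>w. F (z, w)) holomorphic_on {t. Im t > 0}"
    and hF2: "\<And>w. (\<lambda>z. F (z, w)) holomorphic_on {t. Im t > 0}"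
    and nz: "\<And>n z w. Im z > 0 \<Longrightarrow> Im w > 0 \<Longrightarrow> f n (z, w) \<noteq> 0"
  shows "(\<forall>z w. Im z > 0 \<longrightarrow> Im w > 0 \<longrightarrow> F (z, w) \<noteq> 0) \<or> (\<forall>z w. Im z > 0 \<longrightarrow> Im w > 0 \<longrightarrow> F (z, w) = 0)"
proof (rule disjCI)
  assume "\<not> (\<forall>z w. Im z > 0 \<longrightarrow> Im w > 0 \<longrightarrow> F (z, w) = 0)"
  show "\<forall>z w. Im z > 0 \<longrightarrow> Im w > 0 \<longrightarrow> F (z, w) \<noteq> 0"
  proof (rule ccontr)
    assume "\<not> ?thesis"
    then obtain z0 w0 where zw0: "Im z0 > 0" "Im w0 > 0" "F (z0, w0) = 0" by blast
    have c1: "(\<lambda>w. F (z0, w)) constant_on {t. Im t > 0}"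
    proof (rule ccontr)
      assume nc: "\<not> ?thesis"
      have "F (z0, w0) \<noteq> 0"
        by (rule Hurwitz_no_zeros[of "{t. Im t > 0}" "\<lambda>n w. f n (z0, w)" "\<lambda>w. F (z0, w)"])
           (use uhp_open uhp_conn hf1 hF1 ulim_slice_w[OF ul] nc nz zw0 in auto)
      then show False using zw0 by simp
    qed
    have A: "F (z0, w) = 0" if "Im w > 0" for w
      using c1 zw0 that unfolding constant_on_def by force
    have B: "F (z, w) = 0" if "Im z > 0" "Im w > 0" for z w
    proof -
      have c2: "(\<lambda>z. F (z, w)) constant_on {t. Im t > 0}"
      proof (rule ccontr)
        assume nc: "\<not> ?thesis"
        have "F (z0, w) \<noteq> 0"
          by (rule Hurwitz_no_zeros[of "{t. Im t > 0}" "\<lambda>n z. f n (z, w)" "\<lambda>z. F (z, w)"])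
             (use uhp_open uhp_conn hf2 hF2 ulim_slice_z[OF ul] nc nz zw0 that in auto)
        then show False using A that by simp
      qed
      then show ?thesis using A[OF that(2)] zw0 that unfolding constant_on_def by force
    qed
    with \<open>\<not> (\<forall>z w. Im z > 0 \<longrightarrow> Im w > 0 \<longrightarrow> F (z, w) = 0)\<close> show False by blast
  qed
qed

lemma one_plus_of_nat_ne: "1 + (of_nat j :: complex) \<noteq> 0"
  by (metis of_nat_Suc Suc_neq_Zero of_nat_eq_0_iff add.commute)

lemma stepA:
  assumes st: "\<And>z w. Im z > 0 \<Longrightarrow> Im w > 0 \<Longrightarrow> ev2 Q z w \<noteq> 0"
  shows "(\<forall>z w. Im z > 0 \<longrightarrow> Im w > 0 \<longrightarrow> (\<Sum>k\<le>n. of_nat (falling n k) * poly (coeff Q k) z * w^k) \<noteq> 0)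
       \<or> (\<forall>z w. Im z > 0 \<longrightarrow> Im w > 0 \<longrightarrow> (\<Sum>k\<le>n. of_nat (falling n k) * poly (coeff Q k) z * w^k) = 0)"
proof -
  have "(\<forall>z w. Im z > 0 \<longrightarrow> Im w > 0 \<longrightarrow> (\<lambda>x. Fd Q n 0 (fst x) (snd x)) (z, w) \<noteq> 0)
       \<or> (\<forall>z w. Im z > 0 \<longrightarrow> Im w > 0 \<longrightarrow> (\<lambda>x. Fd Q n 0 (fst x) (snd x)) (z, w) = 0)"
  proof (rule hurwitz2[where f = "\<lambda>j x. Fd Q n (1 / real (Suc j)) (fst x) (snd x)"])
    fix K :: "(complex \<times> complex) set" assume "compact K"
    from unif_from_cont[OF Fd_cont[of Q n] this]
    show "uniform_limit K (\<lambda>j x. Fd Q n (1 / real (Suc j)) (fst x) (snd x)) (\<lambda>x. Fd Q n 0 (fst x) (snd x)) sequentially"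
      by simp
  next
    fix j z w
    show "(\<lambda>w. Fd Q n (1 / real (Suc j)) (fst (z, w)) (snd (z, w))) holomorphic_on {t. Im t > 0}"
      unfolding Fd_def by (auto intro!: holomorphic_intros simp: one_plus_of_nat_ne)
    show "(\<lambda>z. Fd Q n (1 / real (Suc j)) (fst (z, w)) (snd (z, w))) holomorphic_on {t. Im t > 0}"
      unfolding Fd_def by (auto intro!: holomorphic_intros simp: one_plus_of_nat_ne)
  next
    fix z w
    show "(\<lambda>w. Fd Q n 0 (fst (z, w)) (snd (z, w))) holomorphic_on {t. Im t > 0}"
      unfolding Fd_def by (auto intro!: holomorphic_intros simp: one_plus_of_nat_ne)
    show "(\<lambda>z. Fd Q n 0 (fst (z, w)) (snd (z, w))) holomorphic_on {t. Im t > 0}"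
      unfolding Fd_def by (auto intro!: holomorphic_intros simp: one_plus_of_nat_ne)
  next
    fix j :: nat and z w :: complex
    assume "Im z > 0" "Im w > 0"
    then show "Fd Q n (1 / real (Suc j)) (fst (z, w)) (snd (z, w)) \<noteq> 0"
      using Fd_nz[OF st] by simp
  qed
  then show ?thesis by (simp add: Fd_0)
qed

lemma uniform_limit_shift:
  assumes "uniform_limit K f F sequentially"
  shows "uniform_limit K (\<lambda>n. f (n + N)) F sequentially"
  unfolding uniform_limit_iff
proof (intro allI impI)
  fix e :: real assume "e > 0"
  then have "eventually (\<lambda>n. \<forall>x\<in>K. dist (f n x) (F x) < e) sequentially"
    using assms unfolding uniform_limit_iff by blast
  then show "eventually (\<lambda>n. \<forall>x\<in>K. dist (f (n + N) x) (F x) < e) sequentially"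
    using eventually_sequentially_seg[of "\<lambda>n. \<forall>x\<in>K. dist (f n x) (F x) < e" N] by simp
qed

lemma hurwitz2':
  fixes f :: "nat \<Rightarrow> complex \<times> complex \<Rightarrow> complex"
  assumes ul: "\<And>K. compact K \<Longrightarrow> uniform_limit K f F sequentially"
    and hf1: "\<And>n z. (\<lambda>w. f n (z, w)) holomorphic_on {t. Im t > 0}"
    and hf2: "\<And>n w. (\<lambda>z. f n (z, w)) holomorphic_on {t. Im t > 0}"
    and hF1: "\<And>z. (\<lambda>w. F (z, w)) holomorphic_on {t. Im t > 0}"
    and hF2: "\<And>w. (\<lambda>z. F (z, w)) holomorphic_on {t. Im t > 0}"
    and nz: "\<And>n. (\<forall>z w. Im z > 0 \<longrightarrow> Im w > 0 \<longrightarrow> f n (z, w) \<noteq> 0) \<or> (\<forall>z w. Im z > 0 \<longrightarrow> Im w > 0 \<longrightarrow> f n (z, w) = 0)"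
  shows "(\<forall>z w. Im z > 0 \<longrightarrow> Im w > 0 \<longrightarrow> F (z, w) \<noteq> 0) \<or> (\<forall>z w. Im z > 0 \<longrightarrow> Im w > 0 \<longrightarrow> F (z, w) = 0)"
proof (cases "\<exists>N. \<forall>n\<ge>N. \<forall>z w. Im z > 0 \<longrightarrow> Im w > 0 \<longrightarrow> f n (z, w) \<noteq> 0")
  case True
  then obtain N where N: "\<And>n z w. n \<ge> N \<Longrightarrow> Im z > 0 \<Longrightarrow> Im w > 0 \<Longrightarrow> f n (z, w) \<noteq> 0" by blast
  show ?thesis
    by (rule hurwitz2[where f = "\<lambda>n. f (n + N)"]) (use uniform_limit_shift[OF ul] hf1 hf2 hF1 hF2 N in auto)
next
  case False
  have fz: "\<exists>n\<ge>M. \<forall>z w. Im z > 0 \<longrightarrow> Im w > 0 \<longrightarrow> f n (z, w) = 0" for M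
    using False nz by blast
  have "F (z, w) = 0" if "Im z > 0" "Im w > 0" for z w
  proof (rule ccontr)
    assume ne: "F (z, w) \<noteq> 0"
    have "uniform_limit {(z, w)} f F sequentially" by (rule ul) simp
    then have "(\<lambda>n. f n (z, w)) \<longlonglongrightarrow> F (z, w)"
      by (rule tendsto_uniform_limitI) simp
    then have "eventually (\<lambda>n. f n (z, w) \<noteq> 0) sequentially"
      using ne by (rule tendsto_imp_eventually_ne)
    then obtain M where "\<And>n. n \<ge> M \<Longrightarrow> f n (z, w) \<noteq> 0" unfolding eventually_sequentially by blast
    with fz[of M] that show False by blast
  qed
  then show ?thesis by blast
qed

lemma forward:
  assumes sm: "\<And>z w. (\<lambda>k. poly (P k) z * w^k) sums G (z, w)"
    and Gb: "H2bar G"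
  shows "let f = (\<lambda>(z, w). \<Sum>k\<le>n. of_nat (falling n k) * poly (P k) z * w ^ k) in H2 f \<or> f = (\<lambda>_. 0)"
proof -
  obtain p where pH: "\<And>m. H2 (p m)" and ul: "\<And>K. compact K \<Longrightarrow> uniform_limit K p G sequentially"
    using Gb unfolding H2bar_def by blast
  have "\<forall>m. \<exists>Q. \<forall>z w. p m (z, w) = ev2 Q z w"
    using pH unfolding H2_def is_poly2_pol2 pol2_def by blast
  then obtain Q where Q: "\<And>m z w. p m (z, w) = ev2 (Q m) z w" by metis
  have stQ: "ev2 (Q m) z w \<noteq> 0" if "Im z > 0" "Im w > 0" for m z w
    using pH[of m] that unfolding H2_def Q by auto
  define T where "T = (\<lambda>x. \<Sum>k\<le>n. of_nat (falling n k) * poly (P k) (fst x) * snd x ^ k)"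
  define Tm where "Tm = (\<lambda>m x. \<Sum>k\<le>n. of_nat (falling n k) * poly (coeff (Q m) k) (fst x) * snd x ^ k)"
  have A: "(\<forall>z w. Im z > 0 \<longrightarrow> Im w > 0 \<longrightarrow> Tm m (z, w) \<noteq> 0) \<or> (\<forall>z w. Im z > 0 \<longrightarrow> Im w > 0 \<longrightarrow> Tm m (z, w) = 0)" for m
    using stepA[of "Q m" n] stQ unfolding Tm_def by simp
  have B: "uniform_limit K Tm T sequentially" if K: "compact K" for K
  proof -
    obtain R0 where R0: "\<And>x. x \<in> K \<Longrightarrow> norm x \<le> R0"
      using compact_imp_bounded[OF K] unfolding bounded_iff by blast
    define R where "R = max R0 0"
    have R: "\<And>x. x \<in> K \<Longrightarrow> norm x \<le> R" and Rnn: "R \<ge> 0" using R0 by (force simp: R_def)+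
    define C where "C = (\<Sum>k\<le>n. real (falling n k) * R^k)"
    have C0: "C \<ge> 0" unfolding C_def using Rnn by (auto intro!: sum_nonneg)
    define K' where "K' = cball (0::complex) R \<times> sphere (0::complex) 1"
    have K': "compact K'" unfolding K'_def by (intro compact_Times compact_cball compact_sphere)
    show ?thesis unfolding uniform_limit_iff
    proof (intro allI impI)
      fix e :: real assume e: "e > 0"
      define e' where "e' = e / (C + 1)"
      have e': "e' > 0" using e C0 by (simp add: e'_def)
      from ul[OF K'] e' have ev: "\<forall>\<^sub>F m in sequentially. \<forall>y\<in>K'. dist (p m y) (G y) < e'"
        unfolding uniform_limit_iff by blast
      show "\<forall>\<^sub>F m in sequentially. \<forall>x\<in>K. dist (Tm m x) (T x) < e"
        using ev
      proof (rule eventually_mono, intro ballI)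
        fix m x assume pm: "\<forall>y\<in>K'. dist (p m y) (G y) < e'" and x: "x \<in> K"
        obtain z w where xzw: "x = (z, w)" by (cases x)
        have nzw: "norm (z, w) \<le> R" using R[OF x] xzw by simp
        have zR: "norm z \<le> R" using norm_fst_le[of z w] nzw by simp
        have wR: "norm w \<le> R" using norm_snd_le[of w z] nzw by simp
        have ck: "cmod (poly (coeff (Q m) k) z - poly (P k) z) \<le> e'" for k
        proof (rule series_coeff_bound[where E = "\<lambda>w'. p m (z, w') - G (z, w')"])
          fix w' :: complex
          show "(\<lambda>k. (poly (coeff (Q m) k) z - poly (P k) z) * w'^k) sums (p m (z, w') - G (z, w'))"
            unfolding Q using sums_diff[OF ev2_sums[of "Q m" z w'] sm[of z w']] by (simp add: algebra_simps)
        next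
          fix w' :: complex assume "cmod w' = 1"
          then have "(z, w') \<in> K'" using zR by (simp add: K'_def)
          then show "cmod (p m (z, w') - G (z, w')) \<le> e'" using pm by (simp add: dist_norm less_imp_le)
        qed
        have "dist (Tm m x) (T x) = cmod (\<Sum>k\<le>n. of_nat (falling n k) * (poly (coeff (Q m) k) z - poly (P k) z) * w^k)"
          unfolding Tm_def T_def xzw dist_norm by (simp add: sum_subtractf[symmetric] algebra_simps)
        also have "\<dots> \<le> (\<Sum>k\<le>n. cmod (of_nat (falling n k) * (poly (coeff (Q m) k) z - poly (P k) z) * w^k))"
          by (rule norm_sum)
        also have "\<dots> \<le> (\<Sum>k\<le>n. real (falling n k) * e' * R^k)"
        proof (rule sum_mono)
          fix k
          have "cmod (w^k) \<le> R^k" using wR by (simp add: norm_power power_mono)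
          then show "cmod (of_nat (falling n k) * (poly (coeff (Q m) k) z - poly (P k) z) * w^k) \<le> real (falling n k) * e' * R^k"
            unfolding norm_mult norm_of_nat using ck[of k] e'
            by (intro mult_mono mult_left_mono) auto
        qed
        also have "\<dots> = e' * C" by (simp add: C_def sum_distrib_left algebra_simps)
        also have "\<dots> < e" using e C0 by (simp add: e'_def field_simps)
        finally show "dist (Tm m x) (T x) < e" .
      qed
    qed
  qed
  have C: "(\<forall>z w. Im z > 0 \<longrightarrow> Im w > 0 \<longrightarrow> T (z, w) \<noteq> 0) \<or> (\<forall>z w. Im z > 0 \<longrightarrow> Im w > 0 \<longrightarrow> T (z, w) = 0)"
  proof (rule hurwitz2'[where f = Tm])
    show "\<And>K. compact K \<Longrightarrow> uniform_limit K Tm T sequentially" using B by blast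
    show "\<And>m. (\<forall>z w. Im z > 0 \<longrightarrow> Im w > 0 \<longrightarrow> Tm m (z, w) \<noteq> 0) \<or> (\<forall>z w. Im z > 0 \<longrightarrow> Im w > 0 \<longrightarrow> Tm m (z, w) = 0)"
      by (rule A)
  qed (auto simp: Tm_def T_def intro!: holomorphic_intros)
  have pT: "pol2 T" unfolding T_def by (intro pol2_intros)
  have fT: "(\<lambda>(z, w). \<Sum>k\<le>n. of_nat (falling n k) * poly (P k) z * w ^ k) = T"
    by (auto simp: T_def fun_eq_iff)
  show ?thesis
    unfolding Let_def fT
  proof (cases "\<forall>z w. Im z > 0 \<longrightarrow> Im w > 0 \<longrightarrow> T (z, w) \<noteq> 0")
    case True
    have "T (\<i>, \<i>) \<noteq> 0" using True by simp
    then have "T \<noteq> (\<lambda>_. 0)" by auto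
    then have "H2 T" unfolding H2_def using True pT is_poly2_pol2 by blast
    then show "H2 T \<or> T = (\<lambda>_. 0)" ..
  next
    case False
    then have "\<forall>z w. Im z > 0 \<longrightarrow> Im w > 0 \<longrightarrow> T (z, w) = 0" using C by blast
    then have "T x = 0" for x using pol2_zero_uhp[OF pT] by blast
    then show "H2 T \<or> T = (\<lambda>_. 0)" by auto
  qed
qed

definition cnk :: "nat \<Rightarrow> nat \<Rightarrow> real" where
  "cnk n k = real (falling n k) / real n ^ k"

definition gfun :: "(nat \<Rightarrow> complex poly) \<Rightarrow> nat \<Rightarrow> complex \<Rightarrow> complex \<Rightarrow> complex" where
  "gfun P n z w = (\<Sum>k\<le>n. of_nat (falling n k) * poly (P k) z * w ^ k)"

definition hfun :: "(nat \<Rightarrow> complex poly) \<Rightarrow> nat \<Rightarrow> complex \<Rightarrow> complex \<Rightarrow> complex" where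
  "hfun P n z w = (\<Sum>k\<le>n. of_real (cnk n k) * poly (P k) z * w ^ k)"

lemma falling_eq_0: "n < k \<Longrightarrow> falling n k = 0"
  unfolding falling_def by (auto intro!: prod_zero bexI[of _ n])

lemma cnk_0 [simp]: "cnk n 0 = 1"
  by (simp add: cnk_def falling_def)

lemma cnk_eq_0: "n < k \<Longrightarrow> cnk n k = 0"
  by (simp add: cnk_def falling_eq_0)

lemma cnk_Suc: "n \<ge> 1 \<Longrightarrow> cnk n (Suc k) = cnk n k * (real (n - k) / real n)"
  by (simp add: cnk_def falling_Suc field_simps)

lemma cnk_bounds: "n \<ge> 1 \<Longrightarrow> 0 \<le> cnk n k \<and> cnk n k \<le> 1 \<and> 1 - cnk n k \<le> real k ^ 2 / real n"
proof (induction k)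
  case 0 then show ?case by simp
next
  case (Suc k)
  note IH = Suc.IH[OF Suc.prems]
  have n: "real n \<ge> 1" using Suc.prems by simp
  show ?case
  proof (cases "n \<le> k")
    case True
    then have "cnk n (Suc k) = 0" by (intro cnk_eq_0) simp
    moreover have "real n \<le> real (Suc k) ^ 2"
    proof -
      have "real n \<le> real (Suc k)" using True by simp
      also have "\<dots> \<le> real (Suc k) ^ 2" by (simp add: power2_eq_square)
      finally show ?thesis .
    qed
    ultimately show ?thesis using n by (simp add: field_simps)
  next
    case False
    define c where "c = cnk n k"
    have f: "real (n - k) / real n = 1 - real k / real n" using False n by (simp add: of_nat_diff field_simps)
    have e: "cnk n (Suc k) = c * (1 - real k / real n)" unfolding cnk_Suc[OF Suc.prems] f c_def by (rule refl)
    have c: "0 \<le> c" "c \<le> 1" "1 - c \<le> real k ^ 2 / real n" using IH c_def by auto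
    have kn: "0 \<le> 1 - real k / real n" "1 - real k / real n \<le> 1" using False n by (auto simp: field_simps)
    have "1 - c * (1 - real k / real n) = (1 - c) + c * (real k / real n)" by (simp add: algebra_simps)
    also have "\<dots> \<le> real k ^ 2 / real n + real k / real n"
    proof -
      have "c * (real k / real n) \<le> real k / real n" using c by (intro mult_left_le_one_le) auto
      then show ?thesis using c by linarith
    qed
    also have "\<dots> \<le> real (Suc k) ^ 2 / real n"
      using n by (simp add: field_simps power2_eq_square)
    finally show ?thesis unfolding e using c kn by (auto intro: mult_nonneg_nonneg mult_le_one)
  qed
qed

lemma cnk_tendsto: "(\<lambda>n. cnk n k) \<longlonglongrightarrow> 1"
proof (rule real_tendsto_sandwich[where f = "\<lambda>n. 1 - real k ^ 2 / real n" and h = "\<lambda>n. 1"])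
  show "\<forall>\<^sub>F n in sequentially. 1 - real k ^ 2 / real n \<le> cnk n k"
    using cnk_bounds eventually_sequentially by (metis (no_types, lifting) diff_le_eq add.commute)
  show "\<forall>\<^sub>F n in sequentially. cnk n k \<le> 1"
    using cnk_bounds eventually_sequentially by metis
  show "(\<lambda>n. 1 - real k ^ 2 / real n) \<longlonglongrightarrow> 1"
    by (rule tendsto_eq_intros lim_const_over_n | simp)+
qed simp

lemma hfun_gfun: "n \<ge> 1 \<Longrightarrow> hfun P n z w = gfun P n z (w / of_nat n)"
  unfolding hfun_def gfun_def cnk_def
  by (intro sum.cong refl) (simp add: power_divide field_simps)

lemma gfun_0: "gfun P 0 z w = poly (P 0) z"
  by (simp add: gfun_def falling_def)

lemma hfun_sums: "(\<lambda>k. of_real (cnk n k) * poly (P k) z * w ^ k) sums hfun P n z w"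
  unfolding hfun_def by (rule sums_finite) (auto simp: cnk_eq_0)

definition linep :: "(nat \<Rightarrow> complex poly) \<Rightarrow> nat \<Rightarrow> complex \<Rightarrow> real \<Rightarrow> complex poly" where
  "linep P n z0 a = (\<Sum>k\<le>n. smult (of_real (cnk n k)) (monom 1 k * pcompose (P k) [:z0, of_real a:]))"

lemma poly_linep: "poly (linep P n z0 a) s = hfun P n (z0 + of_real a * s) s"
  unfolding linep_def hfun_def by (simp add: poly_sum poly_pcompose poly_monom algebra_simps)

lemma coeff_linep: "coeff (linep P n z0 a) j =
   (\<Sum>k\<le>n. of_real (cnk n k) * (if j < k then 0 else coeff (pcompose (P k) [:z0, of_real a:]) (j - k)))"
  unfolding linep_def by (simp add: coeff_sum coeff_monom_mult) (intro sum.cong refl; simp)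

lemma coeff_linep0: "coeff (linep P n z0 a) 0 = poly (P 0) z0"
proof -
  have "coeff (linep P n z0 a) 0 = poly (linep P n z0 a) 0" by (simp add: poly_0_coeff_0)
  also have "\<dots> = hfun P n z0 0" by (simp add: poly_linep)
  also have "\<dots> = poly (P 0) z0" by (simp add: hfun_def)
  finally show ?thesis .
qed

lemma coeff_linep_bound:
  assumes n: "n \<ge> 1" and M: "\<And>k i. k \<le> j \<Longrightarrow> cmod (coeff (pcompose (P k) [:z0, of_real a:]) i) \<le> M"
  shows "cmod (coeff (linep P n z0 a) j) \<le> real (Suc j) * M"
proof -
  have M0: "M \<ge> 0" using M[of 0 0] norm_ge_zero order_trans by blast
  have "cmod (coeff (linep P n z0 a) j) \<le> (\<Sum>k\<le>n. cmod (of_real (cnk n k) * (if j < k then 0 else coeff (pcompose (P k) [:z0, of_real a:]) (j - k))))"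
    unfolding coeff_linep by (rule norm_sum)
  also have "\<dots> \<le> (\<Sum>k\<le>n. if k \<in> {..j} then M else 0)"
  proof (rule sum_mono)
    fix k assume "k \<in> {..n}"
    have "0 \<le> cnk n k" "cnk n k \<le> 1" using cnk_bounds[OF n] by auto
    show "cmod (of_real (cnk n k) * (if j < k then 0 else coeff (pcompose (P k) [:z0, of_real a:]) (j - k))) \<le> (if k \<in> {..j} then M else 0)"
    proof (cases "j < k")
      case True then show ?thesis by simp
    next
      case False
      have "cnk n k * cmod (coeff (pcompose (P k) [:z0, of_real a:]) (j - k)) \<le> 1 * M"
        using M[of k "j - k"] False \<open>0 \<le> cnk n k\<close> \<open>cnk n k \<le> 1\<close> by (intro mult_mono) auto
      then show ?thesis using False \<open>0 \<le> cnk n k\<close> by (simp add: norm_mult)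
    qed
  qed
  also have "\<dots> = (\<Sum>k\<in>{..n} \<inter> {..j}. M)" by (rule sum.inter_restrict[symmetric]) simp
  also have "\<dots> \<le> (\<Sum>k\<in>{..j}. M)" using M0 by (intro sum_mono2) auto
  also have "\<dots> = real (Suc j) * M" by simp
  finally show ?thesis .
qed

lemma poly_bounded_cball: "\<exists>M\<ge>0. \<forall>z. cmod z \<le> r \<longrightarrow> cmod (poly p z) \<le> M"
proof -
  have "compact (poly p ` cball 0 r)" by (intro compact_continuous_image continuous_intros compact_cball)
  then obtain M where "\<forall>y\<in>poly p ` cball 0 r. norm y \<le> M" using compact_imp_bounded bounded_iff by metis
  note M = this
  show ?thesis
  proof (intro exI[of _ "max M 0"] conjI allI impI)
    show "max M 0 \<ge> 0" by simp
    fix z assume "cmod z \<le> r"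
    then have "z \<in> cball 0 r" by (simp add: dist_norm)
    then have "cmod (poly p z) \<le> M" using M by blast
    then show "cmod (poly p z) \<le> max M 0" by (rule max.coboundedI1)
  qed
qed

lemma stab_linep:
  assumes st: "\<And>n z w. Im z > 0 \<Longrightarrow> Im w > 0 \<Longrightarrow> gfun P n z w \<noteq> 0"
    and n: "n \<ge> 1" and a: "a \<ge> 0" and z0: "Im z0 > 0"
  shows "stab (linep P n z0 a)"
  unfolding stab_def
proof (intro allI impI)
  fix s :: complex assume s: "Im s > 0"
  have "Im (z0 + of_real a * s) > 0" using a z0 s by (simp add: add_pos_nonneg)
  moreover have "Im (s / of_nat n) > 0" using s n by simp
  ultimately show "poly (linep P n z0 a) s \<noteq> 0"
    unfolding poly_linep hfun_gfun[OF n] using st by blast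
qed

lemma lineB:
  assumes st: "\<And>n z w. Im z > 0 \<Longrightarrow> Im w > 0 \<Longrightarrow> gfun P n z w \<noteq> 0"
    and A: "A \<ge> 0" and B: "B \<ge> 0" and B1: "B1 \<ge> 0"
  shows "\<exists>K. \<forall>n z0 a s. n \<ge> 1 \<longrightarrow> Im z0 \<ge> 1 \<longrightarrow> cmod z0 \<le> B1 \<longrightarrow> 0 \<le> a \<longrightarrow> a \<le> A \<longrightarrow> cmod s \<le> B \<longrightarrow>
           cmod (hfun P n (z0 + of_real a * s) s) \<le> K"
proof -
  obtain M0 where M0: "M0 \<ge> 0" "\<And>z. cmod z \<le> B1 + A \<Longrightarrow> cmod (poly (P 0) z) \<le> M0"
    using poly_bounded_cball by blast
  obtain M1 where M1: "M1 \<ge> 0" "\<And>z. cmod z \<le> B1 + A \<Longrightarrow> cmod (poly (P 1) z) \<le> M1"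
    using poly_bounded_cball by blast
  obtain M2 where M2: "M2 \<ge> 0" "\<And>z. cmod z \<le> B1 + A \<Longrightarrow> cmod (poly (P 2) z) \<le> M2"
    using poly_bounded_cball by blast
  define M where "M = M0 + M1 + M2"
  have M: "cmod (poly (P k) z) \<le> M" if "k \<le> 2" "cmod z \<le> B1 + A" for k z
  proof -
    have a0: "cmod (poly (P 0) z) \<le> M0" using M0(2) that(2) by blast
    have a1: "cmod (poly (P 1) z) \<le> M1" using M1(2) that(2) by blast
    have a2: "cmod (poly (P 2) z) \<le> M2" using M2(2) that(2) by blast
    have "k = 0 \<or> k = 1 \<or> k = 2" using that by auto
    then show ?thesis using a0 a1 a2 M0(1) M1(1) M2(1) unfolding M_def by (elim disjE) auto
  qed
  have Mnn: "M \<ge> 0" using M0 M1 M2 by (simp add: M_def)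
  have P0nz: "poly (P 0) z \<noteq> 0" if "Im z > 0" for z
    using st[of z \<i> 0] that by (simp add: gfun_0)
  obtain \<delta> where \<delta>: "\<delta> > 0" "\<And>z. cmod z \<le> B1 \<Longrightarrow> Im z \<ge> 1 \<Longrightarrow> \<delta> \<le> cmod (poly (P 0) z)"
  proof -
    define S where "S = cball (0::complex) B1 \<inter> {z. Im z \<ge> 1}"
    show ?thesis
    proof (cases "S = {}")
      case True
      have "False" if "cmod z \<le> B1" "Im z \<ge> 1" for z
      proof -
        have "z \<in> S" using that by (simp add: S_def dist_norm)
        then show False using True by simp
      qed
      then show ?thesis using that[of 1] by auto
    next
      case False
      have "compact S" unfolding S_def by (intro compact_Int_closed compact_cball closed_halfspace_Im_ge)
      moreover have "continuous_on S (\<lambda>z. cmod (poly (P 0) z))" by (intro continuous_intros)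
      ultimately obtain x where x: "x \<in> S" "\<And>y. y \<in> S \<Longrightarrow> cmod (poly (P 0) x) \<le> cmod (poly (P 0) y)"
        using continuous_attains_inf[OF _ False] by blast
      have "poly (P 0) x \<noteq> 0" using x(1) P0nz by (auto simp: S_def)
      then show ?thesis using x by (intro that[of "cmod (poly (P 0) x)"]) (auto simp: S_def dist_norm)
    qed
  qed
  define L where "L = 3 * M / \<delta>"
  have Lnn: "L \<ge> 0" using Mnn \<delta> by (simp add: L_def)
  define K where "K = M * exp (L * B + (3 * L^2 + 2 * L) * B^2)"
  show ?thesis
  proof (intro exI[of _ K] allI impI)
    fix n :: nat and z0 s :: complex and a :: real
    assume n: "n \<ge> 1" and z0: "Im z0 \<ge> 1" and z0B: "cmod z0 \<le> B1" and a: "0 \<le> a" "a \<le> A" and s: "cmod s \<le> B"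
    define q where "q = linep P n z0 a"
    have stq: "stab q" unfolding q_def using stab_linep[OF st n a(1)] z0 by simp
    have q0: "coeff q 0 = poly (P 0) z0" by (simp add: q_def coeff_linep0)
    have q0nz: "poly q 0 \<noteq> 0" using q0 P0nz z0 by (simp add: poly_0_coeff_0)
    have cb: "cmod (coeff (pcompose (P k) [:z0, of_real a:]) i) \<le> M" if "k \<le> 2" for k i
    proof -
      have "cmod (coeff (pcompose (P k) [:z0, of_real a:]) i) * 1 ^ i \<le> M"
      proof (rule poly_coeff_bound)
        fix t :: complex assume t: "cmod t = 1"
        have "cmod (z0 + of_real a * t) \<le> cmod z0 + cmod (of_real a * t)" by (rule norm_triangle_ineq)
        also have "cmod (of_real a * t) = a" using t a by (simp add: norm_mult)
        finally have "cmod (z0 + of_real a * t) \<le> B1 + A" using z0B a by linarith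
        then show "cmod (poly (pcompose (P k) [:z0, of_real a:]) t) \<le> M"
          using M[OF that] by (simp add: poly_pcompose algebra_simps)
      qed simp
      then show ?thesis by simp
    qed
    have c1: "cmod (coeff q 1) \<le> 3 * M"
    proof -
      have "cmod (coeff q 1) \<le> real (Suc 1) * M" unfolding q_def
        by (rule coeff_linep_bound[OF n]) (use cb in auto)
      then show ?thesis using Mnn by simp
    qed
    have c2: "cmod (coeff q 2) \<le> 3 * M"
    proof -
      have "cmod (coeff q 2) \<le> real (Suc 2) * M" unfolding q_def
        by (rule coeff_linep_bound[OF n]) (use cb in auto)
      then show ?thesis by simp
    qed
    have d0: "\<delta> \<le> cmod (coeff q 0)" using \<delta>(2)[OF z0B z0] q0 by simp
    have d1: "cmod (coeff q 0) \<le> M" using M[of 0 z0] z0B A q0 by simp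
    have c0pos: "cmod (coeff q 0) > 0" using d0 \<delta>(1) by linarith
    have r1: "cmod (coeff q 1 / coeff q 0) \<le> L"
    proof -
      have "cmod (coeff q 1 / coeff q 0) = cmod (coeff q 1) / cmod (coeff q 0)" by (simp add: norm_divide)
      also have "\<dots> \<le> 3 * M / cmod (coeff q 0)" using c1 by (intro divide_right_mono) auto
      also have "\<dots> \<le> 3 * M / \<delta>" using d0 \<delta>(1) Mnn c0pos by (intro divide_left_mono) auto
      finally show ?thesis by (simp add: L_def)
    qed
    have r2: "cmod (coeff q 2 / coeff q 0) \<le> L"
    proof -
      have "cmod (coeff q 2 / coeff q 0) = cmod (coeff q 2) / cmod (coeff q 0)" by (simp add: norm_divide)
      also have "\<dots> \<le> 3 * M / cmod (coeff q 0)" using c2 by (intro divide_right_mono) auto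
      also have "\<dots> \<le> 3 * M / \<delta>" using d0 \<delta>(1) Mnn c0pos by (intro divide_left_mono) auto
      finally show ?thesis by (simp add: L_def)
    qed
    have "cmod (poly q s) \<le> cmod (coeff q 0) * exp (cmod (coeff q 1 / coeff q 0) * cmod s
            + (3 * (cmod (coeff q 1 / coeff q 0))^2 + 2 * cmod (coeff q 2 / coeff q 0)) * (cmod s)^2)"
      by (rule stab_bound[OF stq q0nz])
    also have "\<dots> \<le> M * exp (L * B + (3 * L^2 + 2 * L) * B^2)"
    proof -
      define x1 where "x1 = cmod (coeff q 1 / coeff q 0)"
      define x2 where "x2 = cmod (coeff q 2 / coeff q 0)"
      define t where "t = cmod s"
      have x1: "0 \<le> x1" "x1 \<le> L" using r1 by (auto simp: x1_def)
      have x2: "0 \<le> x2" "x2 \<le> L" using r2 by (auto simp: x2_def)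
      have t: "0 \<le> t" "t \<le> B" using s by (auto simp: t_def)
      have "x1 * t \<le> L * B" using x1 t by (intro mult_mono) auto
      moreover have "x1^2 \<le> L^2" using x1 by (intro power_mono) auto
      moreover have "t^2 \<le> B^2" using t by (intro power_mono) auto
      ultimately have "(3 * x1^2 + 2 * x2) * t^2 \<le> (3 * L^2 + 2 * L) * B^2" using x2 Lnn
        by (intro mult_mono) auto
      then have "x1 * t + (3 * x1^2 + 2 * x2) * t^2 \<le> L * B + (3 * L^2 + 2 * L) * B^2"
        using \<open>x1 * t \<le> L * B\<close> by linarith
      then have "exp (x1 * t + (3 * x1^2 + 2 * x2) * t^2) \<le> exp (L * B + (3 * L^2 + 2 * L) * B^2)" by simp
      then show ?thesis unfolding x1_def[symmetric] x2_def[symmetric] t_def[symmetric]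
        using d1 Mnn by (intro mult_mono) auto
    qed
    finally show "cmod (hfun P n (z0 + of_real a * s) s) \<le> K" by (simp add: q_def poly_linep K_def)
  qed
qed

lemma regionB:
  assumes st: "\<And>n z w. Im z > 0 \<Longrightarrow> Im w > 0 \<Longrightarrow> gfun P n z w \<noteq> 0" and B: "B \<ge> 0"
  shows "\<exists>K. \<forall>n z w. n \<ge> 1 \<longrightarrow> cmod z \<le> B \<longrightarrow> cmod w \<le> B \<longrightarrow> (Im z \<ge> 1 \<or> Im w \<le> -1) \<longrightarrow> cmod (hfun P n z w) \<le> K"
proof -
  have "\<exists>K. \<forall>(n::nat) (z0::complex) (a::real) (s::complex). n \<ge> 1 \<longrightarrow> Im z0 \<ge> 1 \<longrightarrow> cmod z0 \<le> B + (B+1) * B \<longrightarrow> 0 \<le> a \<longrightarrow> a \<le> B + 1 \<longrightarrow> cmod s \<le> B \<longrightarrow>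
           cmod (hfun P n (z0 + of_real a * s) s) \<le> K"
    by (rule lineB[OF st]) (use B in auto)
  then obtain K where K0: "\<forall>(n::nat) (z0::complex) (a::real) (s::complex). n \<ge> 1 \<longrightarrow> Im z0 \<ge> 1 \<longrightarrow> cmod z0 \<le> B + (B+1) * B \<longrightarrow> 0 \<le> a \<longrightarrow> a \<le> B + 1 \<longrightarrow> cmod s \<le> B \<longrightarrow>
           cmod (hfun P n (z0 + of_real a * s) s) \<le> K" by blast
  note K = K0[rule_format]
  show ?thesis
  proof (intro exI[of _ K] allI impI)
    fix n :: nat and z w :: complex assume n: "n \<ge> 1" and z: "cmod z \<le> B" and w: "cmod w \<le> B" and c: "Im z \<ge> 1 \<or> Im w \<le> -1"
    show "cmod (hfun P n z w) \<le> K"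
    proof (cases "Im z \<ge> 1")
      case True
      have "cmod z \<le> B + (B+1) * B" using z B by (simp add: add_increasing2)
      then show ?thesis using K[of n z 0 w] n True w B by simp
    next
      case False
      then have w1: "Im w \<le> -1" using c by simp
      define a where "a = B + 1"
      define z0 where "z0 = z - of_real a * w"
      have "Im z \<ge> - B" using abs_Im_le_cmod[of z] z by linarith
      moreover have "a * Im w \<le> - a"
      proof -
        have "a * Im w \<le> a * (-1)" using w1 B by (intro mult_left_mono) (auto simp: a_def)
        then show ?thesis by simp
      qed
      ultimately have iz0: "Im z0 \<ge> 1" by (simp add: z0_def a_def)
      have "cmod z0 \<le> cmod z + cmod (of_real a * w)" unfolding z0_def by (rule norm_triangle_ineq4)
      also have "cmod (of_real a * w) = a * cmod w" using B by (simp add: norm_mult a_def)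
      also have "a * cmod w \<le> (B + 1) * B" using w B by (simp add: a_def mult_left_mono)
      finally have "cmod z0 \<le> B + (B + 1) * B" using z by linarith
      from K[of n z0 a w] n iz0 this w B have "cmod (hfun P n (z0 + of_real a * w) w) \<le> K" by (simp add: a_def)
      then show ?thesis by (simp add: z0_def)
    qed
  qed
qed

lemma norm_tri3: "cmod (a + b + c) \<le> cmod a + cmod b + cmod (c::complex)"
  by (metis add_mono norm_triangle_ineq order_refl order_trans)

lemma discB:
  assumes st: "\<And>n z w. Im z > 0 \<Longrightarrow> Im w > 0 \<Longrightarrow> gfun P n z w \<noteq> 0" and R: "R \<ge> 0"
  shows "\<exists>K. \<forall>n z w. n \<ge> 1 \<longrightarrow> cmod z \<le> R \<longrightarrow> cmod w \<le> R \<longrightarrow> cmod (hfun P n z w) \<le> K"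
proof -
  define L where "L = 2 * R + 2"
  have "\<exists>K. \<forall>n z w. n \<ge> 1 \<longrightarrow> cmod z \<le> R + 2 * L \<longrightarrow> cmod w \<le> R + 2 * L \<longrightarrow> (Im z \<ge> 1 \<or> Im w \<le> -1) \<longrightarrow> cmod (hfun P n z w) \<le> K"
  proof (rule regionB[OF st])
    show "0 \<le> R + 2 * L" using R by (simp add: L_def)
  qed
  then obtain K where K0: "\<forall>n z w. n \<ge> 1 \<longrightarrow> cmod z \<le> R + 2 * L \<longrightarrow> cmod w \<le> R + 2 * L \<longrightarrow> (Im z \<ge> 1 \<or> Im w \<le> -1) \<longrightarrow> cmod (hfun P n z w) \<le> K"
    by blast
  note K = K0[rule_format]
  show ?thesis
  proof (intro exI[of _ K] allI impI)
    fix n :: nat and z w :: complex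
    assume n: "n \<ge> 1" and z: "cmod z \<le> R" and w: "cmod w \<le> R"
    define \<phi>1 where "\<phi>1 = [:z, \<i> * of_real L, - \<i> * of_real (L/2):]"
    define \<phi>2 where "\<phi>2 = [:w, \<i> * of_real L, \<i> * of_real (L/2):]"
    define D where "D = (\<Sum>k\<le>n. smult (of_real (cnk n k)) (pcompose (P k) \<phi>1 * \<phi>2 ^ k))"
    have pD: "poly D s = hfun P n (poly \<phi>1 s) (poly \<phi>2 s)" for s
      unfolding D_def hfun_def by (simp add: poly_sum poly_pcompose algebra_simps)
    have p1: "poly \<phi>1 s = z + \<i> * of_real L * s - \<i> * of_real (L/2) * s^2" for s
      by (simp add: \<phi>1_def algebra_simps power2_eq_square)
    have p2: "poly \<phi>2 s = w + \<i> * of_real L * s + \<i> * of_real (L/2) * s^2" for s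
      by (simp add: \<phi>2_def algebra_simps power2_eq_square)
    have Lnn: "L \<ge> 0" using R by (simp add: L_def)
    have "cmod (coeff D 0) * 1 ^ 0 \<le> K"
    proof (rule poly_coeff_bound)
      fix s :: complex assume s: "cmod s = 1"
      define x where "x = Re s"
      define y where "y = Im s"
      have xy: "x^2 + y^2 = 1" using s by (simp add: x_def y_def cmod_def)
      have x1: "x \<le> 1" "-1 \<le> x" using abs_Re_le_cmod[of s] s by (auto simp: x_def)
      have re2: "Re (s^2) = 2 * x^2 - 1" using xy by (simp add: x_def y_def power2_eq_square)
      have i1: "Im (poly \<phi>1 s) = Im z + L * x - L / 2 * (2 * x^2 - 1)"
        unfolding p1 using re2 by (simp add: x_def)
      have i2: "Im (poly \<phi>2 s) = Im w + L * x + L / 2 * (2 * x^2 - 1)"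
        unfolding p2 using re2 by (simp add: x_def)
      have n1: "cmod (poly \<phi>1 s) \<le> R + 2 * L"
      proof -
        have "cmod (poly \<phi>1 s) \<le> cmod z + cmod (\<i> * of_real L * s) + cmod (- (\<i> * of_real (L/2) * s^2))"
          unfolding p1 by (metis diff_conv_add_uminus norm_tri3)
        also have "\<dots> = cmod z + L + L / 2" using s Lnn by (simp add: norm_mult norm_power)
        finally show ?thesis using z Lnn by linarith
      qed
      have n2: "cmod (poly \<phi>2 s) \<le> R + 2 * L"
      proof -
        have "cmod (poly \<phi>2 s) \<le> cmod w + cmod (\<i> * of_real L * s) + cmod (\<i> * of_real (L/2) * s^2)"
          unfolding p2 by (rule norm_tri3)
        also have "\<dots> = cmod w + L + L / 2" using s Lnn by (simp add: norm_mult norm_power)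
        finally show ?thesis using w Lnn by linarith
      qed
      have reg: "Im (poly \<phi>1 s) \<ge> 1 \<or> Im (poly \<phi>2 s) \<le> -1"
      proof (cases "x \<ge> 0")
        case True
        have "x * (1 - x) \<ge> 0" using True x1 by simp
        then have "L * (x * (1 - x)) \<ge> 0" using Lnn by simp
        moreover have "Im z \<ge> - R" using abs_Im_le_cmod[of z] z by linarith
        moreover have "Im (poly \<phi>1 s) = Im z + L * (x * (1 - x)) + L / 2"
          unfolding i1 by (simp add: algebra_simps power2_eq_square)
        moreover have "L / 2 = R + 1" by (simp add: L_def)
        ultimately have "Im (poly \<phi>1 s) \<ge> 1" by linarith
        then show ?thesis ..
      next
        case False
        have "x * (1 + x) \<le> 0" using False x1 by (simp add: mult_nonpos_nonneg)
        then have "L * (x * (1 + x)) \<le> 0" using Lnn by (simp add: mult_nonneg_nonpos)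
        moreover have "Im w \<le> R" using abs_Im_le_cmod[of w] w by linarith
        moreover have "Im (poly \<phi>2 s) = Im w + L * (x * (1 + x)) - L / 2"
          unfolding i2 by (simp add: algebra_simps power2_eq_square)
        moreover have "L / 2 = R + 1" by (simp add: L_def)
        ultimately have "Im (poly \<phi>2 s) \<le> -1" by linarith
        then show ?thesis ..
      qed
      show "cmod (poly D s) \<le> K" unfolding pD using K[OF n n1 n2 reg] .
    qed simp
    moreover have "coeff D 0 = hfun P n z w"
      by (simp add: poly_0_coeff_0[symmetric] pD \<phi>1_def \<phi>2_def)
    ultimately show "cmod (hfun P n z w) \<le> K" by simp
  qed
qed

lemma coefB:
  assumes K: "\<And>n z w. n \<ge> 1 \<Longrightarrow> cmod z \<le> \<rho> \<Longrightarrow> cmod w \<le> \<rho> \<Longrightarrow> cmod (hfun P n z w) \<le> K"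
    and \<rho>: "\<rho> > 0" and z: "cmod z \<le> \<rho>"
  shows "cmod (poly (P k) z) * \<rho>^k \<le> K"
proof -
  have b: "cnk n k * (cmod (poly (P k) z) * \<rho>^k) \<le> K" if n: "n \<ge> 1" for n
  proof -
    define W where "W = (\<Sum>j\<le>n. monom (of_real (cnk n j) * poly (P j) z) j)"
    have pW: "poly W w = hfun P n z w" for w
      unfolding W_def hfun_def by (simp add: poly_sum poly_monom)
    have cW: "coeff W k = of_real (cnk n k) * poly (P k) z"
    proof (cases "k \<le> n")
      case True then show ?thesis unfolding W_def by (simp add: coeff_sum coeff_monom)
    next
      case False then show ?thesis unfolding W_def by (simp add: coeff_sum coeff_monom cnk_eq_0)
    qed
    have "cmod (coeff W k) * \<rho>^k \<le> K"
      by (rule poly_coeff_bound[OF \<rho>]) (use K[OF n z] pW in auto)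
    moreover have "cnk n k \<ge> 0" using cnk_bounds[OF n] by simp
    ultimately show ?thesis unfolding cW by (simp add: norm_mult mult.assoc)
  qed
  have "(\<lambda>n. cnk n k * (cmod (poly (P k) z) * \<rho>^k)) \<longlonglongrightarrow> 1 * (cmod (poly (P k) z) * \<rho>^k)"
    by (intro tendsto_mult cnk_tendsto tendsto_const)
  then show ?thesis using b by (intro LIMSEQ_le_const2[of _ _ K]) auto
qed

lemma sq_le_four_pow: "real k ^ 2 \<le> 4 ^ k"
proof -
  have "real k \<le> 2 ^ k" using less_exp[of k] by (metis of_nat_le_iff of_nat_numeral of_nat_power less_imp_le)
  then have "real k ^ 2 \<le> (2 ^ k) ^ 2" by (intro power_mono) auto
  also have "((2::real) ^ k) ^ 2 = (2 ^ 2) ^ k" by (simp only: power_mult[symmetric] mult.commute)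
  also have "\<dots> = 4 ^ k" by simp
  finally show ?thesis .
qed

lemma bndB:
  assumes st: "\<And>n z w. Im z > 0 \<Longrightarrow> Im w > 0 \<Longrightarrow> gfun P n z w \<noteq> 0" and R: "R \<ge> 0"
  shows "\<exists>K\<ge>0. \<forall>k z w. cmod z \<le> R \<longrightarrow> cmod w \<le> R \<longrightarrow> cmod (poly (P k) z * w^k) \<le> K * (1/8)^k"
proof -
  define \<rho> where "\<rho> = 8 * R + 1"
  have \<rho>: "\<rho> > 0" "R \<le> \<rho>" "8 * R \<le> \<rho>" using R by (auto simp: \<rho>_def)
  have "\<exists>K. \<forall>n z w. n \<ge> 1 \<longrightarrow> cmod z \<le> \<rho> \<longrightarrow> cmod w \<le> \<rho> \<longrightarrow> cmod (hfun P n z w) \<le> K"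
  proof (rule discB[OF st])
    show "0 \<le> \<rho>" using \<rho> by simp
  qed
  then obtain K0 where K0: "\<forall>n z w. n \<ge> 1 \<longrightarrow> cmod z \<le> \<rho> \<longrightarrow> cmod w \<le> \<rho> \<longrightarrow> cmod (hfun P n z w) \<le> K0"
    by blast
  define K where "K = max K0 0"
  show ?thesis
  proof (intro exI[of _ K] conjI allI impI)
    show "K \<ge> 0" by (simp add: K_def)
    fix k :: nat and z w :: complex assume z: "cmod z \<le> R" and w: "cmod w \<le> R"
    have "cmod (poly (P k) z) * \<rho>^k \<le> K0"
      by (rule coefB[OF _ \<rho>(1)]) (use K0 z \<rho> in auto)
    then have a: "cmod (poly (P k) z) * \<rho>^k \<le> K" unfolding K_def by (rule max.coboundedI1)
    have "cmod (poly (P k) z * w^k) = cmod (poly (P k) z) * cmod w ^ k" by (simp add: norm_mult norm_power)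
    also have "\<dots> \<le> cmod (poly (P k) z) * (\<rho> / 8)^k"
      using w \<rho> by (intro mult_left_mono power_mono) auto
    also have "\<dots> = cmod (poly (P k) z) * \<rho>^k * (1/8)^k" by (simp add: power_divide)
    also have "\<dots> \<le> K * (1/8)^k" by (rule mult_right_mono[OF a]) simp
    finally show "cmod (poly (P k) z * w^k) \<le> K * (1/8)^k" .
  qed
qed

lemma convB:
  assumes st: "\<And>n z w. Im z > 0 \<Longrightarrow> Im w > 0 \<Longrightarrow> gfun P n z w \<noteq> 0"
  shows "\<exists>G. (\<forall>z w. (\<lambda>k. poly (P k) z * w^k) sums G (z, w)) \<and>
    (\<forall>K. compact K \<longrightarrow> uniform_limit K (\<lambda>n x. hfun P (Suc n) (fst x) (snd x)) G sequentially)"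
proof -
  define G where "G = (\<lambda>x. \<Sum>k. poly (P k) (fst x) * snd x ^ k)"
  have sm: "(\<lambda>k. poly (P k) z * w^k) sums G (z, w)" for z w
  proof -
    have "max (cmod z) (cmod w) \<ge> 0" by (simp add: le_max_iff_disj)
    from bndB[OF st this] obtain K where K0: "K \<ge> 0" "\<forall>k z' w'. cmod z' \<le> max (cmod z) (cmod w) \<longrightarrow> cmod w' \<le> max (cmod z) (cmod w) \<longrightarrow> cmod (poly (P k) z' * w'^k) \<le> K * (1/8)^k"
      by blast
    note K = K0(1) K0(2)[rule_format]
    have "summable (\<lambda>k. poly (P k) z * w^k)"
    proof (rule summable_comparison_test'[where g = "\<lambda>k. K * (1/8)^k"])
      show "summable (\<lambda>k. K * (1 / 8) ^ k)" by (intro summable_mult summable_geometric) simp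
      show "\<And>k. k \<ge> 0 \<Longrightarrow> norm (poly (P k) z * w ^ k) \<le> K * (1 / 8) ^ k" using K(2)[of z w] by simp
    qed
    then show ?thesis by (simp add: G_def summable_sums)
  qed
  have ul: "uniform_limit K (\<lambda>n x. hfun P (Suc n) (fst x) (snd x)) G sequentially" if cK: "compact K" for K
  proof -
    obtain R0 where R0: "\<And>x. x \<in> K \<Longrightarrow> norm x \<le> R0"
      using compact_imp_bounded[OF cK] unfolding bounded_iff by blast
    define R where "R = max R0 0"
    have R: "\<And>x. x \<in> K \<Longrightarrow> norm x \<le> R" and Rnn: "R \<ge> 0" using R0 by (force simp: R_def)+
    from bndB[OF st Rnn] obtain C where C0: "C \<ge> 0" "\<forall>k z w. cmod z \<le> R \<longrightarrow> cmod w \<le> R \<longrightarrow> cmod (poly (P k) z * w^k) \<le> C * (1/8)^k"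
      by blast
    note C = C0(1) C0(2)[rule_format]
    have est: "cmod (hfun P (Suc n) z w - G (z, w)) \<le> 2 * C / real (Suc n)"
      if z: "cmod z \<le> R" and w: "cmod w \<le> R" for n z w
    proof -
      define f where "f k = of_real (cnk (Suc n) k) * poly (P k) z * w^k - poly (P k) z * w^k" for k
      have "f sums (hfun P (Suc n) z w - G (z, w))"
        unfolding f_def by (rule sums_diff[OF hfun_sums sm])
      then have eq: "hfun P (Suc n) z w - G (z, w) = suminf f" by (simp add: sums_iff)
      have bd: "cmod (f k) \<le> C / real (Suc n) * (1/2)^k" for k
      proof -
        have cb: "0 \<le> cnk (Suc n) k" "cnk (Suc n) k \<le> 1" "1 - cnk (Suc n) k \<le> real k ^ 2 / real (Suc n)"
          using cnk_bounds[of "Suc n" k] by auto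
        have fk: "f k = of_real (cnk (Suc n) k - 1) * (poly (P k) z * w^k)" by (simp add: f_def algebra_simps)
        have nr: "cmod (complex_of_real (cnk (Suc n) k - 1)) = 1 - cnk (Suc n) k"
          using cb(2) unfolding norm_of_real by simp
        have "cmod (f k) = (1 - cnk (Suc n) k) * cmod (poly (P k) z * w^k)"
          by (simp only: fk norm_mult nr)
        also have "\<dots> \<le> (real k ^ 2 / real (Suc n)) * (C * (1/8)^k)"
          using cb C(2)[OF z w, of k] by (intro mult_mono) auto
        also have "\<dots> = C / real (Suc n) * (real k ^ 2 * (1/8)^k)" by simp
        also have "\<dots> \<le> C / real (Suc n) * (1/2)^k"
        proof (rule mult_left_mono)
          have "real k ^ 2 * (1/8)^k \<le> 4 ^ k * (1/8::real)^k"
            by (intro mult_right_mono sq_le_four_pow) simp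
          also have "(4::real) ^ k * (1/8)^k = (1/2)^k" by (simp add: power_mult_distrib[symmetric])
          finally show "real k ^ 2 * (1/8)^k \<le> (1/2::real)^k" .
        qed (use C(1) in simp)
        finally show ?thesis .
      qed
      have "cmod (suminf f) \<le> (\<Sum>k. C / real (Suc n) * (1/2)^k)"
        by (rule norm_suminf_le[OF bd]) (intro summable_mult summable_geometric, simp)
      also have "(\<Sum>k. C / real (Suc n) * (1/2::real)^k) = C / real (Suc n) * 2"
        by (subst suminf_mult) (auto simp: suminf_geometric intro!: summable_geometric)
      finally show ?thesis unfolding eq by (simp add: mult.commute)
    qed
    show ?thesis unfolding uniform_limit_iff
    proof (intro allI impI)
      fix e :: real assume e: "e > 0"
      obtain N :: nat where N: "2 * C / e < real N" using reals_Archimedean2 by blast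
      have "2 * C < e * real (Suc N)" using N e by (simp add: field_simps)
      then have N': "2 * C / real (Suc N) < e" by (simp add: field_simps)
      show "\<forall>\<^sub>F n in sequentially. \<forall>x\<in>K. dist (hfun P (Suc n) (fst x) (snd x)) (G x) < e"
        unfolding eventually_sequentially
      proof (intro exI[of _ N] allI impI ballI)
        fix n x assume n: "N \<le> n" and x: "x \<in> K"
        obtain z w where xzw: "x = (z, w)" by (cases x)
        have nzw: "norm (z, w) \<le> R" using R[OF x] xzw by simp
        have zR: "cmod z \<le> R" using norm_fst_le[of z w] nzw by simp
        have wR: "cmod w \<le> R" using norm_snd_le[of w z] nzw by simp
        have "2 * C / real (Suc n) \<le> 2 * C / real (Suc N)"
          using n C(1) by (intro divide_left_mono) auto
        then show "dist (hfun P (Suc n) (fst x) (snd x)) (G x) < e"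
          using est[OF zR wR, of n] N' xzw by (simp add: dist_norm)
      qed
    qed
  qed
  show ?thesis using sm ul by blast
qed

lemma hfun_pol2: "pol2 (\<lambda>x. hfun P n (fst x) (snd x))"
  unfolding hfun_def by (intro pol2_intros)

lemma gfun_pol2: "pol2 (\<lambda>x. gfun P n (fst x) (snd x))"
  unfolding gfun_def by (intro pol2_intros)

lemma H2_hfun:
  assumes st: "\<And>n z w. Im z > 0 \<Longrightarrow> Im w > 0 \<Longrightarrow> gfun P n z w \<noteq> 0" and n: "n \<ge> 1"
  shows "H2 (\<lambda>x. snd x ^ m * hfun P n (fst x) (snd x))"
proof -
  have nz: "snd x ^ m * hfun P n (fst x) (snd x) \<noteq> 0" if "Im (fst x) > 0" "Im (snd x) > 0" for x
  proof -
    have "Im (snd x / of_nat n) > 0" using that n by simp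
    then have "hfun P n (fst x) (snd x) \<noteq> 0" using st that(1) hfun_gfun[OF n] by simp
    moreover have "snd x \<noteq> 0" using that(2) by auto
    ultimately show ?thesis by simp
  qed
  have "pol2 (\<lambda>x. snd x ^ m * hfun P n (fst x) (snd x))"
    by (intro pol2_intros hfun_pol2)
  moreover have "(\<lambda>x. snd x ^ m * hfun P n (fst x) (snd x)) \<noteq> (\<lambda>_. 0)"
  proof
    assume "(\<lambda>x. snd x ^ m * hfun P n (fst x) (snd x)) = (\<lambda>_. 0)"
    then have "snd (\<i>, \<i>) ^ m * hfun P n (fst (\<i>, \<i>)) (snd (\<i>, \<i>)) = 0" by metis
    with nz[of "(\<i>, \<i>)"] show False by simp
  qed
  ultimately show ?thesis unfolding H2_def is_poly2_pol2 using nz by auto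
qed

lemma sum_split_shift:
  fixes n m :: nat and f :: "nat \<Rightarrow> 'a::comm_monoid_add"
  shows "(\<Sum>i\<le>n+m. f i) = (\<Sum>i<m. f i) + (\<Sum>i\<le>n. f (i + m))"
proof (induction n)
  case 0 then show ?case by (simp add: lessThan_Suc_atMost[symmetric])
next
  case (Suc n) then show ?case by (simp add: add.commute add.left_commute)
qed

lemma falling_shift: "falling (n + m) (j + m) = falling (n + m) m * falling n j"
proof (induction j)
  case 0 then show ?case by (simp add: falling_def)
next
  case (Suc j)
  have "falling (n + m) (Suc j + m) = falling (n + m) (j + m) * (n + m - (j + m))"
    by (simp add: falling_Suc)
  also have "\<dots> = falling (n + m) m * (falling n j * (n - j))" using Suc by simp
  also have "\<dots> = falling (n + m) m * falling n (Suc j)" by (simp add: falling_Suc)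
  finally show ?case .
qed

lemma gfun_shift:
  assumes "\<And>k. k < m \<Longrightarrow> P k = 0"
  shows "gfun P (n + m) z w = of_nat (falling (n + m) m) * w ^ m * gfun (\<lambda>j. P (j + m)) n z w"
proof -
  have "gfun P (n + m) z w = (\<Sum>i<m. of_nat (falling (n + m) i) * poly (P i) z * w ^ i)
      + (\<Sum>j\<le>n. of_nat (falling (n + m) (j + m)) * poly (P (j + m)) z * w ^ (j + m))"
    unfolding gfun_def by (rule sum_split_shift)
  also have "(\<Sum>i<m. of_nat (falling (n + m) i) * poly (P i) z * w ^ i) = 0"
    using assms by simp
  also have "(\<Sum>j\<le>n. of_nat (falling (n + m) (j + m)) * poly (P (j + m)) z * w ^ (j + m))
     = of_nat (falling (n + m) m) * w ^ m * gfun (\<lambda>j. P (j + m)) n z w"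
    unfolding gfun_def falling_shift by (simp add: sum_distrib_left power_add algebra_simps)
  finally show ?thesis by simp
qed

lemma falling_pos: "m \<le> n \<Longrightarrow> falling n m > 0"
  by (simp add: falling_binom)

lemma fun_gfun: "(\<lambda>(z, w). \<Sum>k\<le>n. of_nat (falling n k) * poly (P k) z * w ^ k) = (\<lambda>x. gfun P n (fst x) (snd x))"
  by (auto simp: gfun_def fun_eq_iff)

lemma backward:
  assumes hyp: "\<forall>n. let f = (\<lambda>(z, w). \<Sum>k\<le>n. of_nat (falling n k) * poly (P k) z * w ^ k)
         in H2 f \<or> f = (\<lambda>_. 0)"
  shows "series_in_H2bar P"
proof -
  have hyp': "H2 (\<lambda>x. gfun P n (fst x) (snd x)) \<or> (\<lambda>x. gfun P n (fst x) (snd x)) = (\<lambda>_. 0)" for n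
    using hyp[rule_format, of n] unfolding Let_def fun_gfun .
  show ?thesis
  proof (cases "\<forall>k. P k = 0")
    case True
    have sm: "(\<lambda>k. poly (P k) z * w ^ k) sums (\<lambda>_. 0) (z, w)" for z w
      using True by simp
    have "H2bar (\<lambda>_. 0)"
      unfolding H2bar_def
    proof (intro exI[of _ "\<lambda>n (x::complex \<times> complex). 1 / of_nat (Suc n) :: complex"] conjI allI impI)
      fix n
      have "pol2 (\<lambda>x. 1 / of_nat (Suc n) :: complex)" by (rule pol2_const)
      then show "H2 (\<lambda>x. 1 / of_nat (Suc n) :: complex)"
        unfolding H2_def is_poly2_pol2 by (auto simp: fun_eq_iff one_plus_of_nat_ne)
    next
      fix K :: "(complex \<times> complex) set"
      show "uniform_limit K (\<lambda>n x. 1 / of_nat (Suc n) :: complex) (\<lambda>_. 0) sequentially"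
        unfolding uniform_limit_iff
      proof (intro allI impI)
        fix e :: real assume e: "e > 0"
        obtain N :: nat where N: "1 / e < real N" using reals_Archimedean2 by blast
        show "\<forall>\<^sub>F n in sequentially. \<forall>x\<in>K. dist (1 / of_nat (Suc n) :: complex) 0 < e"
          unfolding eventually_sequentially
        proof (intro exI[of _ N] allI impI ballI)
          fix n x assume n: "N \<le> n"
          have "1 < e * real N" using N e by (simp add: field_simps)
          also have "\<dots> \<le> e * real (Suc n)" using n e by simp
          finally have "1 / real (Suc n) < e" by (simp add: field_simps)
          moreover have "dist (1 / of_nat (Suc n) :: complex) 0 = 1 / real (Suc n)"
            by (simp only: dist_norm diff_zero norm_divide norm_one norm_of_nat)
          ultimately show "dist (1 / of_nat (Suc n) :: complex) 0 < e" by simp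
        qed
      qed
    qed
    note Hb = this
    show ?thesis unfolding series_in_H2bar_def
    proof (intro exI[of _ "\<lambda>_::complex \<times> complex. 0::complex"] conjI allI)
      show "H2bar (\<lambda>_. 0)" by (rule Hb)
      fix z w :: complex
      show "(\<lambda>k. poly (P k) z * w ^ k) sums 0" using True by simp
    qed
  next
    case False
    define m where "m = (LEAST k. P k \<noteq> 0)"
    have Pm: "P m \<noteq> 0" using False unfolding m_def by (metis (mono_tags) LeastI)
    have below: "P k = 0" if "k < m" for k
      using that unfolding m_def using not_less_Least by blast
    define P' where "P' = (\<lambda>j. P (j + m))"
    have st': "gfun P' n z w \<noteq> 0" if zw: "Im z > 0" "Im w > 0" for n z w
    proof
      assume g0: "gfun P' n z w = 0"
      have id: "gfun P (n + m) z' w' = of_nat (falling (n + m) m) * w' ^ m * gfun P' n z' w'" for z' w'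
        unfolding P'_def by (rule gfun_shift) (use below in auto)
      have "gfun P (n + m) z w = 0" using g0 id by simp
      then have "\<not> H2 (\<lambda>x. gfun P (n + m) (fst x) (snd x))"
        using zw unfolding H2_def by auto
      then have zero: "gfun P (n + m) z' w' = 0" for z' w'
        using hyp'[of "n + m"] by (metis fst_conv snd_conv)
      have fpos: "of_nat (falling (n + m) m) \<noteq> (0::complex)" using falling_pos[of m "n + m"] by simp
      have "poly (P' 0) z' = 0" for z'
      proof -
        define W where "W = (\<Sum>j\<le>n. monom (of_nat (falling n j) * poly (P' j) z') j)"
        have pW: "poly W t = gfun P' n z' t" for t
          unfolding W_def gfun_def by (simp add: poly_sum poly_monom)
        have "W = 0"
        proof (rule poly_zero_uhp)
          fix t :: complex assume t: "Im t > 0"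
          then have "t \<noteq> 0" by auto
          then show "poly W t = 0" using zero[of z' t] id[of z' t] fpos by (simp add: pW)
        qed
        then have "coeff W 0 = 0" by simp
        then show ?thesis unfolding W_def by (simp add: coeff_sum coeff_monom falling_def)
      qed
      then have "P' 0 = 0" using poly_all_0_iff_0 by blast
      with Pm show False by (simp add: P'_def)
    qed
    obtain G' where G': "\<And>z w. (\<lambda>k. poly (P' k) z * w^k) sums G' (z, w)"
      "\<And>K. compact K \<Longrightarrow> uniform_limit K (\<lambda>n x. hfun P' (Suc n) (fst x) (snd x)) G' sequentially"
      using convB[of P'] st' by blast
    define G where "G = (\<lambda>x. snd x ^ m * G' x)"
    have sm: "(\<lambda>k. poly (P k) z * w ^ k) sums G (z, w)" for z w
    proof -
      have "(\<lambda>j. w ^ m * (poly (P' j) z * w ^ j)) sums (w ^ m * G' (z, w))"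
        by (rule sums_mult[OF G'(1)])
      then have "(\<lambda>j. poly (P (j + m)) z * w ^ (j + m)) sums G (z, w)"
        by (simp add: P'_def G_def power_add algebra_simps)
      then show ?thesis by (subst (asm) sums_zero_iff_shift) (use below in auto)
    qed
    have "H2bar G"
      unfolding H2bar_def
    proof (intro exI[of _ "\<lambda>n x. snd x ^ m * hfun P' (Suc n) (fst x) (snd x)"] conjI allI impI)
      fix n
      show "H2 (\<lambda>x. snd x ^ m * hfun P' (Suc n) (fst x) (snd x))"
        by (rule H2_hfun) (use st' in auto)
    next
      fix K :: "(complex \<times> complex) set" assume cK: "compact K"
      obtain R0 where R0: "\<And>x. x \<in> K \<Longrightarrow> norm x \<le> R0"
        using compact_imp_bounded[OF cK] unfolding bounded_iff by blast
      define R where "R = max R0 0"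
      have R: "\<And>x. x \<in> K \<Longrightarrow> norm x \<le> R" and Rnn: "R \<ge> 0" using R0 by (force simp: R_def)+
      show "uniform_limit K (\<lambda>n x. snd x ^ m * hfun P' (Suc n) (fst x) (snd x)) G sequentially"
        unfolding uniform_limit_iff
      proof (intro allI impI)
        fix e :: real assume e: "e > 0"
        define e' where "e' = e / (R ^ m + 1)"
        have e': "e' > 0" using e Rnn by (simp add: e'_def add_nonneg_pos)
        have "\<forall>\<^sub>F n in sequentially. \<forall>x\<in>K. dist (hfun P' (Suc n) (fst x) (snd x)) (G' x) < e'"
          using G'(2)[OF cK] e' unfolding uniform_limit_iff by blast
        then show "\<forall>\<^sub>F n in sequentially. \<forall>x\<in>K. dist (snd x ^ m * hfun P' (Suc n) (fst x) (snd x)) (G x) < e"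
        proof (rule eventually_mono, intro ballI)
          fix n x assume h: "\<forall>x\<in>K. dist (hfun P' (Suc n) (fst x) (snd x)) (G' x) < e'" and x: "x \<in> K"
          have wR: "norm (snd x) \<le> R" using R[OF x] norm_snd_le[of "snd x" "fst x"] by (cases x) auto
          have "dist (snd x ^ m * hfun P' (Suc n) (fst x) (snd x)) (G x)
              = norm (snd x) ^ m * dist (hfun P' (Suc n) (fst x) (snd x)) (G' x)"
            by (simp add: G_def dist_norm norm_mult norm_power right_diff_distrib[symmetric])
          also have "\<dots> \<le> R ^ m * e'"
            using h x wR Rnn by (intro mult_mono power_mono) (auto simp: less_imp_le)
          also have "\<dots> < e"
          proof -
            have p: "R ^ m \<ge> 0" using Rnn by simp
            have "R ^ m / (R ^ m + 1) < 1" using p by simp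
            then have "e * (R ^ m / (R ^ m + 1)) < e * 1" using e by (intro mult_strict_left_mono) auto
            moreover have "R ^ m * e' = e * (R ^ m / (R ^ m + 1))" by (simp add: e'_def)
            ultimately show ?thesis by simp
          qed
          finally show "dist (snd x ^ m * hfun P' (Suc n) (fst x) (snd x)) (G x) < e" .
        qed
      qed
    qed
    then show ?thesis unfolding series_in_H2bar_def using sm by blast
  qed
qed

theorem mainTheorem16:
  fixes P :: "nat \<Rightarrow> complex poly"
  shows "series_in_H2bar P \<longleftrightarrow>
    (\<forall>n. let f = (\<lambda>(z, w). \<Sum>k\<le>n. of_nat (falling n k) * poly (P k) z * w ^ k)
         in H2 f \<or> f = (\<lambda>_. 0))"
proof
  assume "series_in_H2bar P"
  then obtain G where sm: "\<And>z w. (\<lambda>k. poly (P k) z * w ^ k) sums G (z, w)" and "H2bar G"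
    unfolding series_in_H2bar_def by blast
  then show "\<forall>n. let f = (\<lambda>(z, w). \<Sum>k\<le>n. of_nat (falling n k) * poly (P k) z * w ^ k)
         in H2 f \<or> f = (\<lambda>_. 0)"
    using forward by blast
next
  assume "\<forall>n. let f = (\<lambda>(z, w). \<Sum>k\<le>n. of_nat (falling n k) * poly (P k) z * w ^ k)
         in H2 f \<or> f = (\<lambda>_. 0)"
  then show "series_in_H2bar P" by (rule backward)
qed

end
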